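(* For all formulas $\alpha,\beta,\delta$: (1) $\alpha\vDash\alpha$; (2) if $\alpha\vDash\beta$ and $\beta\vDash\delta$, then $\alpha\vDash\delta$.
   Context: Hilbert spaces and states: for $n\ge1$, $\mathcal H^{(n)}=(\mathbb C^2)^{\otimes n}$ with canonical basis $|x_1,\dots,x_n\rangle$ ($x_i\in\{0,1\}$, $|0\rangle=(1,0)$, $|1\rangle=(0,1)$); $\mathfrak D(\mathcal H^{(n)})$ is the set of density operators (qumixes). A truth-perspective is a unitary $\mathfrak T$ on $\mathbb C^2$, $\mathfrak T^{(n)}=\mathfrak T^{\otimes n}$. $^{\mathfrak T}P_1^{(n)}$ (resp. $^{\mathfrak T}P_0^{(n)}$) is the projection onto the span of the $\mathfrak T^{(n)}|x_1,\dots,x_n\rangle$ with $x_n=1$ (resp. $0$). $\mathtt p_{\mathfrak T}(\rho)=\mathrm{tr}(^{\mathfrak T}P_1^{(n)}\rho)$ for $\rho\in\mathfrak D(\mathcal H^{(n)})$, and $\rho\preceq_{\mathfrak T}\sigma$ iff $\mathtt p_{\mathfrak T}(\rho)\le\mathtt p_{\mathfrak T}(\sigma)$. $Red^{(j_1,\dots,j_s)}_{[n_1,\dots,n_t]}(\rho)$ is the reduced state of $\rho$ on factors $j_1,\dots,j_s$ of $\mathcal H^{(n_1)}\otimes\cdots\otimes\mathcal H^{(n_t)}$. Gates (canonical basis, extended linearly): $\mathtt{NOT}^{(n)}|x_1..x_n\rangle=|x_1..x_{n-1}\rangle\otimes|1-x_n\rangle$; $\sqrt{\mathtt I}^{(n)}|x_1..x_n\rangle=|x_1..x_{n-1}\rangle\otimes\frac1{\sqrt2}((-1)^{x_n}|x_n\rangle+|1-x_n\rangle)$;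 $\sqrt{\mathtt{NOT}}^{(n)}|x_1..x_n\rangle=|x_1..x_{n-1}\rangle\otimes(\frac{1-i}2|x_n\rangle+\frac{1+i}2|1-x_n\rangle)$; $\mathtt{XOR}^{(m,n)}|x_1..x_m,y_1..y_n\rangle=|x_1..x_m,y_1..y_{n-1}\rangle\otimes|x_m\oplus y_n\rangle$; $\mathtt T^{(m,n,p)}|x_1..x_m,y_1..y_n,z_1..z_p\rangle=|x_1..x_m,y_1..y_n,z_1..z_{p-1}\rangle\otimes|x_my_n\oplus z_p\rangle$ ($\oplus$ addition mod 2). For a gate $G$ on $\mathcal H^{(n)}$: $G_{\mathfrak T}=\mathfrak T^{(n)}G\mathfrak T^{(n)\dagger}$, $^{\mathfrak D}G_{\mathfrak T}(\rho)=G_{\mathfrak T}\rho G_{\mathfrak T}^\dagger$. Language: formulas built from atomic formulas (including distinguished atoms $\mathbf t,\mathbf f$) with unary $\lnot,\sqrt{id},\sqrt\lnot$, binary $\uplus$, ternary $\intercal$. $At(\alpha)$ = number of occurrences of atomic formulas in $\alpha$. Syntactical tree: $Level_1^\alpha=(\alpha)$; $Level_{i+1}^\alpha$ is obtained from $Level_i^\alpha=(\beta_1,\dots,\beta_r)$ by replacing each non-atomic $\beta_j$ by its immediate subformulas (arguments, in order) and keeping atomic $\beta_j$; the last level $Level_h^\alpha$ lists all atomic occurrences. $\mathcal H^{(At\alpha)}=\bigotimes_j\mathcal H^{(At\beta_j)}$. The $\mathfrak T$-gate $G^\alpha_{\mathfrak T(i)}$ ($1\le i<h$) is the tensor product over $j$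 of: identity of $\mathbb C^2$ if $\beta_j$ atomic; $\mathtt{NOT}_{\mathfrak T}^{(At\beta)}$, $\sqrt{\mathtt I}_{\mathfrak T}^{(At\beta)}$, $\sqrt{\mathtt{NOT}}_{\mathfrak T}^{(At\beta)}$ for $\lnot\beta,\sqrt{id}\beta,\sqrt\lnot\beta$; $\mathtt{XOR}_{\mathfrak T}^{(At\beta',At\beta'')}$ for $\beta'\uplus\beta''$; $\mathtt T_{\mathfrak T}^{(At\beta',At\beta'',At\beta''')}$ for $\intercal(\beta',\beta'',\beta''')$. Holistic model: a map $\mathtt{Hol}_{\mathfrak T}$ assigning to each level $Level_i^\alpha$ of each formula $\alpha$ a qumix in $\mathfrak D(\mathcal H^{(At\alpha)})$ such that (a) $\mathtt{Hol}_{\mathfrak T}(Level_i^\alpha)={}^{\mathfrak D}G^\alpha_{\mathfrak T(i)}(\mathtt{Hol}_{\mathfrak T}(Level_{i+1}^\alpha))$ for $1\le i<h$; (b) (normality) for each $\gamma$, with the contextual meaning of the occurrence $\beta_j$ in $Level_i^\gamma=(\beta_1,\dots,\beta_r)$ defined as $Red^{(j)}_{[At\beta_1,\dots,At\beta_r]}(\mathtt{Hol}_{\mathfrak T}(Level_i^\gamma))$, all occurrences of the same subformula $\beta$ in the tree of $\gamma$ have the same contextual meaning, denoted $\mathtt{Hol}^\gamma_{\mathfrak T}(\beta)$; (c) every occurrence of $\mathbf f$ (resp. $\mathbf t$) has contextual meaning $^{\mathfrak T}P_0^{(1)}$ (resp. $^{\mathfrak T}P_1^{(1)}$). Logical consequence: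 $\alpha\vDash\beta$ iff for every truth-perspective $\mathfrak T$, every formula $\gamma$ having both $\alpha$ and $\beta$ as subformulas (a formula counts as a subformula of itself), and every holistic model $\mathtt{Hol}_{\mathfrak T}$, $\mathtt{Hol}^\gamma_{\mathfrak T}(\alpha)\preceq_{\mathfrak T}\mathtt{Hol}^\gamma_{\mathfrak T}(\beta)$. *)

theory Defs
  imports Complex_Main
begin

datatype form =
    Atom nat
  | Tt
  | Ff
  | Neg form
  | SqId form
  | SqNeg form
  | Xor form form
  | Toff form form form

fun atomic :: "form \<Rightarrow> bool" where
  "atomic (Atom k) = True"
| "atomic Tt = True"
| "atomic Ff = True"
| "atomic _ = False"

fun At :: "form \<Rightarrow> nat" where
  "At (Atom k) = 1"
| "At Tt = 1"
| "At Ff = 1"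
| "At (Neg a) = At a"
| "At (SqId a) = At a"
| "At (SqNeg a) = At a"
| "At (Xor a b) = At a + At b"
| "At (Toff a b c) = At a + At b + At c"

fun args :: "form \<Rightarrow> form list" where
  "args (Neg a) = [a]"
| "args (SqId a) = [a]"
| "args (SqNeg a) = [a]"
| "args (Xor a b) = [a, b]"
| "args (Toff a b c) = [a, b, c]"
| "args _ = []"

fun subf :: "form \<Rightarrow> form set" where
  "subf (Neg a) = insert (Neg a) (subf a)"
| "subf (SqId a) = insert (SqId a) (subf a)"
| "subf (SqNeg a) = insert (SqNeg a) (subf a)"
| "subf (Xor a b) = insert (Xor a b) (subf a \<union> subf b)"
| "subf (Toff a b c) = insert (Toff a b c) (subf a \<union> subf b \<union> subf c)"
| "subf x = {x}"

fun height :: "form \<Rightarrow> nat" where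
  "height (Neg a) = Suc (height a)"
| "height (SqId a) = Suc (height a)"
| "height (SqNeg a) = Suc (height a)"
| "height (Xor a b) = Suc (max (height a) (height b))"
| "height (Toff a b c) = Suc (max (height a) (max (height b) (height c)))"
| "height _ = 1"

definition expand :: "form \<Rightarrow> form list" where
  "expand b = (if atomic b then [b] else args b)"

definition expand_all :: "form list \<Rightarrow> form list" where
  "expand_all bs = concat (map expand bs)"

text \<open>Level i (1-indexed) of the syntactical tree of a.\<close>
definition level :: "form \<Rightarrow> nat \<Rightarrow> form list" where
  "level a i = (expand_all ^^ (i - 1)) [a]"

text \<open>Valid occurrence position: the j-th entry (0-indexed) of level i.\<close>
definition occ :: "form \<Rightarrow> nat \<Rightarrow> nat \<Rightarrow> bool" where
  "occ g i j \<longleftrightarrow> 1 \<le> i \<and> i \<le> height g \<and> j < length (level g i)"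

text \<open>An operator on H^(n) is represented by its matrix entries
  A x y = <x|A|y> in the canonical basis, indexed by bit lists of length n
  (False = |0>, True = |1>); entries outside the basis are 0.\<close>

type_synonym op = "bool list \<Rightarrow> bool list \<Rightarrow> complex"

definition blists :: "nat \<Rightarrow> bool list set" where
  "blists n = {xs. length xs = n}"

definition mult :: "nat \<Rightarrow> op \<Rightarrow> op \<Rightarrow> op" where
  "mult n A B = (\<lambda>x y. if length x = n \<and> length y = n
      then (\<Sum>z\<in>blists n. A x z * B z y) else 0)"

definition adj :: "op \<Rightarrow> op" where
  "adj A = (\<lambda>x y. cnj (A y x))"

definition trace :: "nat \<Rightarrow> op \<Rightarrow> complex" where
  "trace n A = (\<Sum>x\<in>blists n. A x x)"

definition id_op :: "nat \<Rightarrow> op" where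
  "id_op n = (\<lambda>x y. if length x = n \<and> x = y then 1 else 0)"

definition density :: "nat \<Rightarrow> op \<Rightarrow> bool" where
  "density n \<rho> \<longleftrightarrow>
     (\<forall>x y. \<not> (length x = n \<and> length y = n) \<longrightarrow> \<rho> x y = 0) \<and>
     (\<forall>x y. \<rho> x y = cnj (\<rho> y x)) \<and>
     (\<forall>v :: bool list \<Rightarrow> complex.
        0 \<le> Re (\<Sum>x\<in>blists n. \<Sum>y\<in>blists n. cnj (v x) * \<rho> x y * v y)) \<and>
     trace n \<rho> = 1"

text \<open>Tensor product of a list of operators, each given with its number of qubits.\<close>
fun tensor :: "(nat \<times> op) list \<Rightarrow> op" where
  "tensor [] = (\<lambda>x y. if x = [] \<and> y = [] then 1 else 0)"
| "tensor ((k, A) # rest) =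
     (\<lambda>x y. A (take k x) (take k y) * tensor rest (drop k x) (drop k y))"

text \<open>Reduced state of rho on the j-th factor (0-indexed) of
  H^(ns!0) \<otimes> ... \<otimes> H^(ns!(t-1)) (partial trace over the other factors).\<close>
definition red :: "nat list \<Rightarrow> nat \<Rightarrow> op \<Rightarrow> op" where
  "red ns j \<rho> = (\<lambda>x y. if length x = ns ! j \<and> length y = ns ! j then
      (let k = sum_list (take j ns) in
        \<Sum>z\<in>blists (sum_list ns - ns ! j).
          \<rho> (take k z @ x @ drop k z) (take k z @ y @ drop k z))
      else 0)"

text \<open>A truth-perspective: unitary on C^2, U b c = <b|U|c>.\<close>
definition unitary2 :: "(bool \<Rightarrow> bool \<Rightarrow> complex) \<Rightarrow> bool" where
  "unitary2 U \<longleftrightarrow>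
     (\<forall>a b. (\<Sum>c\<in>UNIV. U a c * cnj (U b c)) = (if a = b then 1 else 0)) \<and>
     (\<forall>a b. (\<Sum>c\<in>UNIV. cnj (U c a) * U c b) = (if a = b then 1 else 0))"

definition Tn :: "(bool \<Rightarrow> bool \<Rightarrow> complex) \<Rightarrow> nat \<Rightarrow> op" where
  "Tn U n = (\<lambda>x y. if length x = n \<and> length y = n
      then (\<Prod>i<n. U (x ! i) (y ! i)) else 0)"

definition conjT :: "(bool \<Rightarrow> bool \<Rightarrow> complex) \<Rightarrow> nat \<Rightarrow> op \<Rightarrow> op" where
  "conjT U n G = mult n (mult n (Tn U n) G) (adj (Tn U n))"

definition apply_op :: "nat \<Rightarrow> op \<Rightarrow> op \<Rightarrow> op" where
  "apply_op n G \<rho> = mult n (mult n G \<rho>) (adj G)"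

definition perm_gate :: "nat \<Rightarrow> (bool list \<Rightarrow> bool list) \<Rightarrow> op" where
  "perm_gate n f = (\<lambda>x y. if length x = n \<and> length y = n \<and> x = f y then 1 else 0)"

definition NOT_g :: "nat \<Rightarrow> op" where
  "NOT_g n = perm_gate n (\<lambda>y. butlast y @ [\<not> last y])"

definition XOR_g :: "nat \<Rightarrow> nat \<Rightarrow> op" where
  "XOR_g m n = perm_gate (m + n) (\<lambda>w. butlast w @ [w ! (m - 1) \<noteq> last w])"

definition TOFF_g :: "nat \<Rightarrow> nat \<Rightarrow> nat \<Rightarrow> op" where
  "TOFF_g m n p = perm_gate (m + n + p)
     (\<lambda>w. butlast w @ [(w ! (m - 1) \<and> w ! (m + n - 1)) \<noteq> last w])"

text \<open>sqrt I: |x',x_n> |-> |x'> \<otimes> 1/sqrt2 ((-1)^x_n |x_n> + |1-x_n>).\<close>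
definition SQI_g :: "nat \<Rightarrow> op" where
  "SQI_g n = (\<lambda>x y. if length x = n \<and> length y = n \<and> butlast x = butlast y
      then (if last x = last y then (if last y then -1 else 1) else 1)
             / complex_of_real (sqrt 2)
      else 0)"

text \<open>sqrt NOT: |x',x_n> |-> |x'> \<otimes> ((1-i)/2 |x_n> + (1+i)/2 |1-x_n>).\<close>
definition SQNOT_g :: "nat \<Rightarrow> op" where
  "SQNOT_g n = (\<lambda>x y. if length x = n \<and> length y = n \<and> butlast x = butlast y
      then (if last x = last y then (1 - \<i>) / 2 else (1 + \<i>) / 2)
      else 0)"

text \<open>The factor contributed by an entry of a level to the T-gate.\<close>
fun gate_of :: "(bool \<Rightarrow> bool \<Rightarrow> complex) \<Rightarrow> form \<Rightarrow> op" where
  "gate_of U (Neg a) = conjT U (At a) (NOT_g (At a))"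
| "gate_of U (SqId a) = conjT U (At a) (SQI_g (At a))"
| "gate_of U (SqNeg a) = conjT U (At a) (SQNOT_g (At a))"
| "gate_of U (Xor a b) = conjT U (At a + At b) (XOR_g (At a) (At b))"
| "gate_of U (Toff a b c) =
     conjT U (At a + At b + At c) (TOFF_g (At a) (At b) (At c))"
| "gate_of U _ = id_op 1"

definition level_gate :: "(bool \<Rightarrow> bool \<Rightarrow> complex) \<Rightarrow> form \<Rightarrow> nat \<Rightarrow> op" where
  "level_gate U a i = tensor (map (\<lambda>b. (At b, gate_of U b)) (level a i))"

definition P1 :: "(bool \<Rightarrow> bool \<Rightarrow> complex) \<Rightarrow> nat \<Rightarrow> op" where
  "P1 U n = conjT U n (\<lambda>x y. if length x = n \<and> x = y \<and> last x then 1 else 0)"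

definition P0 :: "(bool \<Rightarrow> bool \<Rightarrow> complex) \<Rightarrow> nat \<Rightarrow> op" where
  "P0 U n = conjT U n (\<lambda>x y. if length x = n \<and> x = y \<and> \<not> last x then 1 else 0)"

definition prob :: "(bool \<Rightarrow> bool \<Rightarrow> complex) \<Rightarrow> nat \<Rightarrow> op \<Rightarrow> real" where
  "prob U n \<rho> = Re (trace n (mult n (P1 U n) \<rho>))"

type_synonym hol = "form \<Rightarrow> nat \<Rightarrow> op"

definition ctx :: "hol \<Rightarrow> form \<Rightarrow> nat \<Rightarrow> nat \<Rightarrow> op" where
  "ctx Hol g i j = red (map At (level g i)) j (Hol g i)"

definition holistic :: "(bool \<Rightarrow> bool \<Rightarrow> complex) \<Rightarrow> hol \<Rightarrow> bool" where
  "holistic U Hol \<longleftrightarrow>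
     (\<forall>a i. 1 \<le> i \<and> i \<le> height a \<longrightarrow> density (At a) (Hol a i)) \<and>
     (\<forall>a i. 1 \<le> i \<and> i < height a \<longrightarrow>
        Hol a i = apply_op (At a) (level_gate U a i) (Hol a (Suc i))) \<and>
     (\<forall>g i j i' j'. occ g i j \<and> occ g i' j' \<and> level g i ! j = level g i' ! j' \<longrightarrow>
        ctx Hol g i j = ctx Hol g i' j') \<and>
     (\<forall>g i j. occ g i j \<and> level g i ! j = Ff \<longrightarrow> ctx Hol g i j = P0 U 1) \<and>
     (\<forall>g i j. occ g i j \<and> level g i ! j = Tt \<longrightarrow> ctx Hol g i j = P1 U 1)"

text \<open>Hol^g(b): the (common) contextual meaning of the occurrences of b in g.\<close>
definition holm :: "hol \<Rightarrow> form \<Rightarrow> form \<Rightarrow> op" where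
  "holm Hol g b = (SOME \<rho>. \<exists>i j. occ g i j \<and> level g i ! j = b \<and> \<rho> = ctx Hol g i j)"

definition entails :: "form \<Rightarrow> form \<Rightarrow> bool" (infix "\<Turnstile>" 50) where
  "a \<Turnstile> b \<longleftrightarrow>
     (\<forall>U g Hol. unitary2 U \<and> a \<in> subf g \<and> b \<in> subf g \<and> holistic U Hol \<longrightarrow>
        prob U (At a) (holm Hol g a) \<le> prob U (At b) (holm Hol g b))"

end

theory Submission
  imports Defs
begin


lemma finite_blists[simp]: "finite (blists n)"
proof -
  have "blists n = {xs. set xs \<subseteq> (UNIV::bool set) \<and> length xs = n}" by (auto simp: blists_def)
  thus ?thesis using finite_lists_length_eq[of "UNIV::bool set" n] by simp
qed

lemma mem_blists[simp]: "xs \<in> blists n \<longleftrightarrow> length xs = n" by (simp add: blists_def)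

lemma blists_add: "blists (a+b) = (\<lambda>(u,v). u@v) ` (blists a \<times> blists b)"
proof (rule set_eqI, rule iffI)
  fix w assume "w \<in> blists (a+b)"
  thus "w \<in> (\<lambda>(u,v). u@v) ` (blists a \<times> blists b)"
    by (auto intro!: image_eqI[of _ _ "(take a w, drop a w)"])
qed auto

lemma sum_split: "(\<Sum>w\<in>blists (a+b). f w) = (\<Sum>u\<in>blists a. \<Sum>v\<in>blists b. f (u@v))"
proof -
  have inj: "inj_on (\<lambda>(u,v). u@v) (blists a \<times> blists b)"
    by (auto simp: inj_on_def)
  have "(\<Sum>w\<in>blists (a+b). f w) = (\<Sum>p\<in>blists a \<times> blists b. f (fst p @ snd p))"
    unfolding blists_add by (rule trans[OF sum.reindex[OF inj]]) (simp add: case_prod_unfold)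
  also have "\<dots> = (\<Sum>u\<in>blists a. \<Sum>v\<in>blists b. f (u@v))"
    by (simp add: sum.cartesian_product case_prod_unfold)
  finally show ?thesis .
qed



definition tens :: "nat \<Rightarrow> op \<Rightarrow> op \<Rightarrow> op" where
  "tens a A B = (\<lambda>x y. A (take a x) (take a y) * B (drop a x) (drop a y))"

definition supp :: "nat \<Rightarrow> op \<Rightarrow> bool" where
  "supp n A \<longleftrightarrow> (\<forall>x y. \<not> (length x = n \<and> length y = n) \<longrightarrow> A x y = 0)"

lemma tensor_append: "tensor (xs@ys) = tens (sum_list (map fst xs)) (tensor xs) (tensor ys)"
proof (induction xs)
  case Nil thus ?case by (simp add: tens_def)
next
  case (Cons p xs)
  obtain k A where p: "p = (k,A)" by fastforce
  have "tensor (p # xs @ ys) x y = tens (sum_list (map fst (p # xs))) (tensor (p # xs)) (tensor ys) x y" for x y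
    using Cons by (simp add: p tens_def take_take drop_take drop_drop mult.assoc add.commute)
  thus ?case by (simp add: fun_eq_iff)
qed

lemma mult_assoc: "mult n (mult n A B) C = mult n A (mult n B C)"
proof (intro ext)
  fix x y
  show "mult n (mult n A B) C x y = mult n A (mult n B C) x y"
  proof (cases "length x = n \<and> length y = n")
    case True
    have "mult n (mult n A B) C x y = (\<Sum>z\<in>blists n. (\<Sum>w\<in>blists n. A x w * B w z) * C z y)"
      using True by (simp add: mult_def)
    also have "\<dots> = (\<Sum>z\<in>blists n. \<Sum>w\<in>blists n. A x w * B w z * C z y)"
      by (simp add: sum_distrib_right)
    also have "\<dots> = (\<Sum>w\<in>blists n. \<Sum>z\<in>blists n. A x w * B w z * C z y)"
      by (rule sum.swap)
    also have "\<dots> = (\<Sum>w\<in>blists n. A x w * (\<Sum>z\<in>blists n. B w z * C z y))"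
      by (simp add: sum_distrib_left mult.assoc)
    also have "\<dots> = mult n A (mult n B C) x y"
      using True by (simp add: mult_def)
    finally show ?thesis .
  qed (auto simp: mult_def)
qed

lemma sum_delta1: "finite S \<Longrightarrow> (\<Sum>z\<in>S. (if P \<and> x = z then 1 else 0) * f z) = (if P \<and> x \<in> S then f x else (0::complex))"
  by (cases P) (simp_all add: if_distrib[of "\<lambda>t. t * _"] cong: if_cong)

lemma sum_delta2: "finite S \<Longrightarrow> (\<Sum>z\<in>S. f z * (if P \<and> z = y then 1 else 0)) = (if P \<and> y \<in> S then f y else (0::complex))"
  by (cases P) (simp_all add: if_distrib[of "\<lambda>t. _ * t"] cong: if_cong)

lemma sum_delta3: "finite S \<Longrightarrow> (\<Sum>z\<in>S. (if x = z then 1 else 0) * f z) = (if x \<in> S then f x else (0::complex))"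
  by (simp add: if_distrib[of "\<lambda>t. t * _"] cong: if_cong)

lemma sum_delta4: "finite S \<Longrightarrow> (\<Sum>z\<in>S. f z * (if z = y then 1 else 0)) = (if y \<in> S then f y else (0::complex))"
  by (simp add: if_distrib[of "\<lambda>t. _ * t"] cong: if_cong)

lemma sum_delta5: "finite S \<Longrightarrow> (\<Sum>z\<in>S. (if z = x then 1 else 0) * f z) = (if x \<in> S then f x else (0::complex))"
  by (simp add: if_distrib[of "\<lambda>t. t * _"] cong: if_cong)

lemma mult_id_left: "supp n A \<Longrightarrow> mult n (id_op n) A = A"
  by (auto simp: fun_eq_iff mult_def id_op_def supp_def sum_delta1 sum_delta3)

lemma mult_id_right: "supp n A \<Longrightarrow> mult n A (id_op n) = A"
  by (auto simp: fun_eq_iff mult_def id_op_def supp_def sum_delta2 sum_delta4)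

lemma adj_mult: "adj (mult n A B) = mult n (adj B) (adj A)"
  by (auto simp: fun_eq_iff mult_def adj_def mult.commute)

lemma adj_adj[simp]: "adj (adj A) = A" by (simp add: adj_def)

lemma supp_mult[simp]: "supp n (mult n A B)" by (simp add: supp_def mult_def)
lemma supp_id[simp]: "supp n (id_op n)" by (simp add: supp_def id_op_def)
lemma supp_adj: "supp n A \<Longrightarrow> supp n (adj A)" by (auto simp: supp_def adj_def)

lemma take_drop_len: "length w = a + b \<Longrightarrow> w = take a w @ drop a w" by simp

lemma mult_tens: "mult (a+b) (tens a A B) (tens a C D) = tens a (mult a A C) (mult b B D)"
proof (intro ext)
  fix x y
  show "mult (a+b) (tens a A B) (tens a C D) x y = tens a (mult a A C) (mult b B D) x y"
  proof (cases "length x = a+b \<and> length y = a+b")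
    case True
    have "mult (a+b) (tens a A B) (tens a C D) x y =
      (\<Sum>u\<in>blists a. \<Sum>v\<in>blists b. tens a A B x (u@v) * tens a C D (u@v) y)"
      using True by (simp add: mult_def sum_split)
    also have "\<dots> = (\<Sum>u\<in>blists a. \<Sum>v\<in>blists b. (A (take a x) u * C u (take a y)) * (B (drop a x) v * D v (drop a y)))"
      by (intro sum.cong refl) (simp add: tens_def)
    also have "\<dots> = (\<Sum>u\<in>blists a. A (take a x) u * C u (take a y)) * (\<Sum>v\<in>blists b. B (drop a x) v * D v (drop a y))"
      by (simp add: sum_product)
    also have "\<dots> = tens a (mult a A C) (mult b B D) x y"
      using True by (simp add: tens_def mult_def)
    finally show ?thesis .
  next
    case False
    hence "length (take a x) \<noteq> a \<or> length (drop a x) \<noteq> b \<or> length (take a y) \<noteq> a \<or> length (drop a y) \<noteq> b"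
      by auto
    thus ?thesis using False by (auto simp: tens_def mult_def)
  qed
qed

lemma adj_tens: "adj (tens a A B) = tens a (adj A) (adj B)"
  by (simp add: fun_eq_iff adj_def tens_def)

lemma id_tens: "id_op (a+b) = tens a (id_op a) (id_op b)"
proof (intro ext)
  fix x y :: "bool list"
  have "(length x = a + b \<and> x = y) \<longleftrightarrow> ((length (take a x) = a \<and> take a x = take a y) \<and> (length (drop a x) = b \<and> drop a x = drop a y))"
    by (cases "length x = a+b") (auto, (metis append_take_drop_id)+)
  thus "id_op (a+b) x y = tens a (id_op a) (id_op b) x y"
    by (simp add: id_op_def tens_def)
qed

definition uni :: "nat \<Rightarrow> op \<Rightarrow> bool" where
  "uni n G \<longleftrightarrow> supp n G \<and> mult n (adj G) G = id_op n \<and> mult n G (adj G) = id_op n"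

lemma supp_tens: "supp a A \<Longrightarrow> supp b B \<Longrightarrow> supp (a+b) (tens a A B)"
  unfolding supp_def tens_def
  by (metis (no_types, lifting) add_diff_cancel_left' append_take_drop_id length_append length_drop mult_eq_0_iff)

lemma uni_tens: "uni a A \<Longrightarrow> uni b B \<Longrightarrow> uni (a+b) (tens a A B)"
  unfolding uni_def by (simp add: supp_tens adj_tens mult_tens id_tens)

lemma uni_id: "uni n (id_op n)"
proof -
  have "adj (id_op n) = id_op n" by (auto simp: id_op_def adj_def fun_eq_iff)
  thus ?thesis unfolding uni_def by (simp add: mult_id_left)
qed


lemma sum4_cdab: "(\<Sum>a\<in>A. \<Sum>b\<in>B. \<Sum>c\<in>C. \<Sum>d\<in>D. f a b c d) = (\<Sum>c\<in>C. \<Sum>d\<in>D. \<Sum>a\<in>A. \<Sum>b\<in>B. f a b c d)"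
proof -
  have "(\<Sum>a\<in>A. \<Sum>b\<in>B. \<Sum>c\<in>C. \<Sum>d\<in>D. f a b c d) = (\<Sum>a\<in>A. \<Sum>c\<in>C. \<Sum>b\<in>B. \<Sum>d\<in>D. f a b c d)"
    by (intro sum.cong refl) (rule sum.swap)
  also have "\<dots> = (\<Sum>a\<in>A. \<Sum>c\<in>C. \<Sum>d\<in>D. \<Sum>b\<in>B. f a b c d)"
    by (intro sum.cong refl) (rule sum.swap)
  also have "\<dots> = (\<Sum>c\<in>C. \<Sum>a\<in>A. \<Sum>d\<in>D. \<Sum>b\<in>B. f a b c d)"
    by (rule sum.swap)
  also have "\<dots> = (\<Sum>c\<in>C. \<Sum>d\<in>D. \<Sum>a\<in>A. \<Sum>b\<in>B. f a b c d)"
    by (intro sum.cong refl) (rule sum.swap)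
  finally show ?thesis .
qed

lemma sum4_bdac: "(\<Sum>a\<in>A. \<Sum>b\<in>B. \<Sum>c\<in>C. \<Sum>d\<in>D. f a b c d) = (\<Sum>b\<in>B. \<Sum>d\<in>D. \<Sum>a\<in>A. \<Sum>c\<in>C. f a b c d)"
proof -
  have "(\<Sum>a\<in>A. \<Sum>b\<in>B. \<Sum>c\<in>C. \<Sum>d\<in>D. f a b c d) = (\<Sum>b\<in>B. \<Sum>a\<in>A. \<Sum>c\<in>C. \<Sum>d\<in>D. f a b c d)"
    by (rule sum.swap)
  also have "\<dots> = (\<Sum>b\<in>B. \<Sum>a\<in>A. \<Sum>d\<in>D. \<Sum>c\<in>C. f a b c d)"
    by (intro sum.cong refl) (rule sum.swap)
  also have "\<dots> = (\<Sum>b\<in>B. \<Sum>d\<in>D. \<Sum>a\<in>A. \<Sum>c\<in>C. f a b c d)"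
    by (intro sum.cong refl) (rule sum.swap)
  finally show ?thesis .
qed


definition redb :: "nat \<Rightarrow> nat \<Rightarrow> nat \<Rightarrow> op \<Rightarrow> op" where
  "redb k m n \<rho> = (\<lambda>x y. if length x = m \<and> length y = m then
      (\<Sum>u\<in>blists k. \<Sum>v\<in>blists (n-k-m). \<rho> (u@x@v) (u@y@v)) else 0)"

lemma apply_op_eq: "length x = n \<Longrightarrow> length y = n \<Longrightarrow>
  apply_op n G \<rho> x y = (\<Sum>w\<in>blists n. \<Sum>w'\<in>blists n. G x w * \<rho> w w' * cnj (G y w'))"
  unfolding apply_op_def mult_def adj_def
  by (simp add: sum_distrib_right) (rule sum.swap)

lemma split3: "(\<Sum>w\<in>blists (k+m+r). f w) = (\<Sum>w1\<in>blists k. \<Sum>w2\<in>blists m. \<Sum>w3\<in>blists r. f (w1@w2@w3))"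
  by (simp add: sum_split add.assoc)

lemma uni_col: "uni k G \<Longrightarrow> a \<in> blists k \<Longrightarrow> b \<in> blists k \<Longrightarrow>
   (\<Sum>u\<in>blists k. G u b * cnj (G u a)) = (if a = b then 1 else 0)"
proof -
  assume "uni k G" "a \<in> blists k" "b \<in> blists k"
  hence "mult k (adj G) G a b = id_op k a b" by (simp add: uni_def)
  thus ?thesis using \<open>a \<in> blists k\<close> \<open>b \<in> blists k\<close>
    by (simp add: mult_def adj_def id_op_def mult.commute)
qed

lemma tens3: "length u = k \<Longrightarrow> length x = m \<Longrightarrow> length w1 = k \<Longrightarrow> length w2 = m \<Longrightarrow>
  tens k G1 (tens m G2 G3) (u@x@v) (w1@w2@w3) = G1 u w1 * G2 x w2 * G3 v w3"
  by (simp add: tens_def)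

lemma T2:
  assumes n: "n = k+m+r" and u1: "uni k G1" and u3: "uni r G3"
  shows "redb k m n (apply_op n (tens k G1 (tens m G2 G3)) \<rho>) = apply_op m G2 (redb k m n \<rho>)"
proof (intro ext)
  fix x y :: "bool list"
  let ?G = "tens k G1 (tens m G2 G3)"
  show "redb k m n (apply_op n ?G \<rho>) x y = apply_op m G2 (redb k m n \<rho>) x y"
  proof (cases "length x = m \<and> length y = m")
    case False thus ?thesis by (auto simp: redb_def apply_op_def mult_def)
  next
    case True
    have r: "n - k - m = r" using n by simp
    define K where "K w w' = (\<Sum>u\<in>blists k. \<Sum>v\<in>blists r. ?G (u@x@v) w * cnj (?G (u@y@v) w'))" for w w'
    have "redb k m n (apply_op n ?G \<rho>) x y =
       (\<Sum>u\<in>blists k. \<Sum>v\<in>blists r. \<Sum>w\<in>blists n. \<Sum>w'\<in>blists n. ?G (u@x@v) w * \<rho> w w' * cnj (?G (u@y@v) w'))"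
      using True n by (simp add: redb_def apply_op_eq)
    also have "\<dots> = (\<Sum>w\<in>blists n. \<Sum>w'\<in>blists n. \<Sum>u\<in>blists k. \<Sum>v\<in>blists r. ?G (u@x@v) w * \<rho> w w' * cnj (?G (u@y@v) w'))"
      by (rule sum4_cdab)
    also have "\<dots> = (\<Sum>w\<in>blists n. \<Sum>w'\<in>blists n. \<rho> w w' * K w w')"
      unfolding K_def by (simp only: sum_distrib_left mult_ac)
    also have "\<dots> = (\<Sum>b1\<in>blists k. \<Sum>b2\<in>blists m. \<Sum>b3\<in>blists r.
                      \<Sum>a1\<in>blists k. \<Sum>a2\<in>blists m. \<Sum>a3\<in>blists r.
         \<rho> (b1@b2@b3) (a1@a2@a3) * ((if a1 = b1 then 1 else 0) * (if a3 = b3 then 1 else 0) * (G2 x b2 * cnj (G2 y a2))))"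
    proof -
      have K: "K (b1@b2@b3) (a1@a2@a3) = (if a1 = b1 then 1 else 0) * (if a3 = b3 then 1 else 0) * (G2 x b2 * cnj (G2 y a2))"
        if "length b1 = k" "length b2 = m" "length a1 = k" "length a2 = m" "length b3 = r" "length a3 = r" for b1 b2 b3 a1 a2 a3
      proof -
        have "K (b1@b2@b3) (a1@a2@a3) = (\<Sum>u\<in>blists k. \<Sum>v\<in>blists r. (G1 u b1 * cnj (G1 u a1)) * (G3 v b3 * cnj (G3 v a3)) * (G2 x b2 * cnj (G2 y a2)))"
          unfolding K_def using that True by (intro sum.cong refl) (simp add: tens3 mult_ac)
        also have "\<dots> = (\<Sum>u\<in>blists k. G1 u b1 * cnj (G1 u a1)) * (\<Sum>v\<in>blists r. G3 v b3 * cnj (G3 v a3)) * (G2 x b2 * cnj (G2 y a2))"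
          by (simp only: sum_distrib_left sum_distrib_right mult.assoc) (rule sum.swap)
        also have "\<dots> = (if a1 = b1 then 1 else 0) * (if a3 = b3 then 1 else 0) * (G2 x b2 * cnj (G2 y a2))"
          using that by (simp add: uni_col[OF u1] uni_col[OF u3])
        finally show ?thesis .
      qed
      show ?thesis unfolding n split3 by (intro sum.cong refl) (simp add: K)
    qed
    also have "\<dots> = (\<Sum>b1\<in>blists k. \<Sum>b2\<in>blists m. \<Sum>b3\<in>blists r. \<Sum>a2\<in>blists m.
         \<rho> (b1@b2@b3) (b1@a2@b3) * (G2 x b2 * cnj (G2 y a2)))"
    proof -
      have P: "(\<Sum>a1\<in>blists k. \<Sum>a2\<in>blists m. \<Sum>a3\<in>blists r.
         \<rho> (b1@b2@b3) (a1@a2@a3) * ((if a1 = b1 then 1 else 0) * (if a3 = b3 then 1 else 0) * (G2 x b2 * cnj (G2 y a2)))) =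
         (\<Sum>a2\<in>blists m. \<rho> (b1@b2@b3) (b1@a2@b3) * (G2 x b2 * cnj (G2 y a2)))"
        if "b1 \<in> blists k" "b3 \<in> blists r" for b1 b2 b3
      proof -
      show "(\<Sum>a1\<in>blists k. \<Sum>a2\<in>blists m. \<Sum>a3\<in>blists r.
         \<rho> (b1@b2@b3) (a1@a2@a3) * ((if a1 = b1 then 1 else 0) * (if a3 = b3 then 1 else 0) * (G2 x b2 * cnj (G2 y a2)))) =
         (\<Sum>a2\<in>blists m. \<rho> (b1@b2@b3) (b1@a2@b3) * (G2 x b2 * cnj (G2 y a2)))"
        using that
      proof -
        have "(\<Sum>a2\<in>blists m. \<Sum>a3\<in>blists r.
         \<rho> (b1@b2@b3) (a1@a2@a3) * ((if a1 = b1 then 1 else 0) * (if a3 = b3 then 1 else 0) * (G2 x b2 * cnj (G2 y a2)))) =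
         (if a1 = b1 then 1 else 0) * (\<Sum>a2\<in>blists m. \<Sum>a3\<in>blists r.
         \<rho> (b1@b2@b3) (b1@a2@a3) * ((if a3 = b3 then 1 else 0) * (G2 x b2 * cnj (G2 y a2))))" for a1
          by (cases "a1 = b1") simp_all
        hence "(\<Sum>a1\<in>blists k. \<Sum>a2\<in>blists m. \<Sum>a3\<in>blists r.
         \<rho> (b1@b2@b3) (a1@a2@a3) * ((if a1 = b1 then 1 else 0) * (if a3 = b3 then 1 else 0) * (G2 x b2 * cnj (G2 y a2)))) =
         (\<Sum>a2\<in>blists m. \<Sum>a3\<in>blists r.
         \<rho> (b1@b2@b3) (b1@a2@a3) * ((if a3 = b3 then 1 else 0) * (G2 x b2 * cnj (G2 y a2))))"
          using that(1) by (simp add: sum_delta5)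
        also have "\<dots> = (\<Sum>a2\<in>blists m. \<rho> (b1@b2@b3) (b1@a2@b3) * (G2 x b2 * cnj (G2 y a2)))"
        proof (intro sum.cong refl)
          fix a2
          have "\<rho> (b1@b2@b3) (b1@a2@a3) * ((if a3 = b3 then 1 else 0) * (G2 x b2 * cnj (G2 y a2))) =
                (if b3 = a3 then 1 else 0) * (\<rho> (b1@b2@b3) (b1@a2@a3) * (G2 x b2 * cnj (G2 y a2)))" for a3
            by auto
          note h = this
          show "(\<Sum>a3\<in>blists r. \<rho> (b1@b2@b3) (b1@a2@a3) * ((if a3 = b3 then 1 else 0) * (G2 x b2 * cnj (G2 y a2)))) =
                \<rho> (b1@b2@b3) (b1@a2@b3) * (G2 x b2 * cnj (G2 y a2))"
            using that(2) by (simp only: h) (simp add: sum_delta3)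
        qed
        finally show ?thesis .
      qed
      qed
      show ?thesis by (simp add: P)
    qed
    also have "\<dots> = (\<Sum>b2\<in>blists m. \<Sum>a2\<in>blists m. \<Sum>b1\<in>blists k. \<Sum>b3\<in>blists r.
         \<rho> (b1@b2@b3) (b1@a2@b3) * (G2 x b2 * cnj (G2 y a2)))"
      by (rule sum4_bdac)
    also have "\<dots> = (\<Sum>b2\<in>blists m. \<Sum>a2\<in>blists m. G2 x b2 * redb k m n \<rho> b2 a2 * cnj (G2 y a2))"
      using r by (intro sum.cong refl) (simp add: redb_def sum_distrib_left sum_distrib_right mult_ac)
    also have "\<dots> = apply_op m G2 (redb k m n \<rho>) x y"
      using True by (simp add: apply_op_eq)
    finally show ?thesis .
  qed
qed



lemma sum3_bca: "(\<Sum>a\<in>A. \<Sum>b\<in>B. \<Sum>c\<in>C. f a b c) = (\<Sum>b\<in>B. \<Sum>c\<in>C. \<Sum>a\<in>A. f a b c)"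
proof -
  have "(\<Sum>a\<in>A. \<Sum>b\<in>B. \<Sum>c\<in>C. f a b c) = (\<Sum>b\<in>B. \<Sum>a\<in>A. \<Sum>c\<in>C. f a b c)"
    by (rule sum.swap)
  also have "\<dots> = (\<Sum>b\<in>B. \<Sum>c\<in>C. \<Sum>a\<in>A. f a b c)"
    by (intro sum.cong refl) (rule sum.swap)
  finally show ?thesis .
qed

definition psd :: "nat \<Rightarrow> op \<Rightarrow> bool" where
  "psd n \<rho> \<longleftrightarrow> (\<forall>v :: bool list \<Rightarrow> complex.
        0 \<le> Re (\<Sum>x\<in>blists n. \<Sum>y\<in>blists n. cnj (v x) * \<rho> x y * v y))"

definition herm :: "op \<Rightarrow> bool" where
  "herm \<rho> \<longleftrightarrow> (\<forall>x y. \<rho> x y = cnj (\<rho> y x))"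

lemma density_iff: "density n \<rho> \<longleftrightarrow> supp n \<rho> \<and> herm \<rho> \<and> psd n \<rho> \<and> trace n \<rho> = 1"
  by (simp add: density_def supp_def herm_def psd_def)

lemma supp_apply[simp]: "supp n (apply_op n G \<rho>)" by (simp add: apply_op_def)

lemma herm_apply: "herm \<rho> \<Longrightarrow> herm (apply_op n G \<rho>)"
  unfolding herm_def
proof (intro allI)
  fix x y assume h: "\<forall>x y. \<rho> x y = cnj (\<rho> y x)"
  show "apply_op n G \<rho> x y = cnj (apply_op n G \<rho> y x)"
  proof (cases "length x = n \<and> length y = n")
    case True
    have "apply_op n G \<rho> x y = (\<Sum>w\<in>blists n. \<Sum>w'\<in>blists n. G x w * \<rho> w w' * cnj (G y w'))"
      using True by (simp add: apply_op_eq)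
    also have "\<dots> = (\<Sum>w'\<in>blists n. \<Sum>w\<in>blists n. G x w * \<rho> w w' * cnj (G y w'))"
      by (rule sum.swap)
    also have "\<dots> = cnj (apply_op n G \<rho> y x)"
    proof -
      have h': "cnj (\<rho> a b) = \<rho> b a" for a b using h by (metis complex_cnj_cnj)
      show ?thesis using True by (simp add: apply_op_eq h' mult_ac)
    qed
    finally show ?thesis .
  qed (auto simp: apply_op_def mult_def)
qed

lemma psd_apply: "psd n \<rho> \<Longrightarrow> psd n (apply_op n G \<rho>)"
  unfolding psd_def
proof (intro allI)
  fix v :: "bool list \<Rightarrow> complex"
  assume h: "\<forall>v :: bool list \<Rightarrow> complex. 0 \<le> Re (\<Sum>x\<in>blists n. \<Sum>y\<in>blists n. cnj (v x) * \<rho> x y * v y)"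
  define V where "V w = (\<Sum>y\<in>blists n. cnj (G y w) * v y)" for w
  have "(\<Sum>x\<in>blists n. \<Sum>y\<in>blists n. cnj (v x) * apply_op n G \<rho> x y * v y) =
        (\<Sum>x\<in>blists n. \<Sum>y\<in>blists n. \<Sum>w\<in>blists n. \<Sum>w'\<in>blists n. cnj (v x) * (G x w * \<rho> w w' * cnj (G y w')) * v y)"
    by (simp add: apply_op_eq sum_distrib_left sum_distrib_right)
  also have "\<dots> = (\<Sum>w\<in>blists n. \<Sum>w'\<in>blists n. \<Sum>x\<in>blists n. \<Sum>y\<in>blists n. cnj (v x) * (G x w * \<rho> w w' * cnj (G y w')) * v y)"
    by (rule sum4_cdab)
  also have "\<dots> = (\<Sum>w\<in>blists n. \<Sum>w'\<in>blists n. cnj (V w) * \<rho> w w' * V w')"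
    unfolding V_def by (simp add: sum_distrib_left sum_distrib_right mult_ac)
  finally show "0 \<le> Re (\<Sum>x\<in>blists n. \<Sum>y\<in>blists n. cnj (v x) * apply_op n G \<rho> x y * v y)"
    using h by simp
qed

lemma trace_apply: "uni n G \<Longrightarrow> trace n (apply_op n G \<rho>) = trace n \<rho>"
proof -
  assume u: "uni n G"
  have "trace n (apply_op n G \<rho>) = (\<Sum>x\<in>blists n. \<Sum>w\<in>blists n. \<Sum>w'\<in>blists n. G x w * \<rho> w w' * cnj (G x w'))"
    by (simp add: trace_def apply_op_eq)
  also have "\<dots> = (\<Sum>w\<in>blists n. \<Sum>w'\<in>blists n. \<Sum>x\<in>blists n. G x w * \<rho> w w' * cnj (G x w'))"
    by (rule sum3_bca)
  also have "\<dots> = (\<Sum>w\<in>blists n. \<Sum>w'\<in>blists n. \<rho> w w' * (if w' = w then 1 else 0))"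
  proof (intro sum.cong refl)
    fix w w' assume "w \<in> blists n" "w' \<in> blists n"
    have "(\<Sum>x\<in>blists n. G x w * \<rho> w w' * cnj (G x w')) = \<rho> w w' * (\<Sum>x\<in>blists n. G x w * cnj (G x w'))"
      by (simp add: sum_distrib_left mult_ac)
    thus "(\<Sum>x\<in>blists n. G x w * \<rho> w w' * cnj (G x w')) = \<rho> w w' * (if w' = w then 1 else 0)"
      using uni_col[OF u \<open>w' \<in> blists n\<close> \<open>w \<in> blists n\<close>] by simp
  qed
  also have "\<dots> = trace n \<rho>"
    by (simp add: trace_def sum_delta4)
  finally show ?thesis .
qed

lemma density_apply: "density n \<rho> \<Longrightarrow> uni n G \<Longrightarrow> density n (apply_op n G \<rho>)"
  by (simp add: density_iff herm_apply psd_apply trace_apply)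

lemma apply_id: "supp n \<rho> \<Longrightarrow> apply_op n (id_op n) \<rho> = \<rho>"
proof -
  assume "supp n \<rho>"
  have "adj (id_op n) = id_op n" by (auto simp: id_op_def adj_def fun_eq_iff)
  thus ?thesis using \<open>supp n \<rho>\<close> by (simp add: apply_op_def mult_id_left mult_id_right)
qed



lemma sum_single: "finite S \<Longrightarrow> u \<in> S \<Longrightarrow> (\<And>z. z \<in> S \<Longrightarrow> z \<noteq> u \<Longrightarrow> f z = 0) \<Longrightarrow> sum f S = f u"
  by (metis (no_types, lifting) sum.remove sum.neutral add.right_neutral DiffE insertCI)

lemma sum_embed:
  assumes n: "n = k+m+r" and u: "length u = k" and w: "length w = r"
    and h: "\<And>z. length z = n \<Longrightarrow> take k z \<noteq> u \<or> drop (k+m) z \<noteq> w \<Longrightarrow> f z = 0"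
  shows "(\<Sum>z\<in>blists n. f z) = (\<Sum>x\<in>blists m. f (u@x@w))"
proof -
  have "(\<Sum>z\<in>blists n. f z) = (\<Sum>z1\<in>blists k. \<Sum>z2\<in>blists m. \<Sum>z3\<in>blists r. f (z1@z2@z3))"
    unfolding n by (rule split3)
  also have "\<dots> = (\<Sum>z2\<in>blists m. \<Sum>z3\<in>blists r. \<Sum>z1\<in>blists k. f (z1@z2@z3))"
    by (rule sum3_bca)
  also have "\<dots> = (\<Sum>z2\<in>blists m. \<Sum>z3\<in>blists r. f (u@z2@z3))"
  proof (intro sum.cong refl)
    fix z2 z3 assume a: "z2 \<in> blists m" "z3 \<in> blists r"
    show "(\<Sum>z1\<in>blists k. f (z1@z2@z3)) = f (u@z2@z3)"
      by (rule sum_single) (use a u n in \<open>auto intro!: h\<close>)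
  qed
  also have "\<dots> = (\<Sum>z2\<in>blists m. f (u@z2@w))"
  proof (intro sum.cong refl)
    fix z2 assume a: "z2 \<in> blists m"
    show "(\<Sum>z3\<in>blists r. f (u@z2@z3)) = f (u@z2@w)"
      by (rule sum_single) (use a u w n in \<open>auto intro!: h\<close>)
  qed
  finally show ?thesis .
qed

lemma blists_0[simp]: "blists 0 = {[]}" by (auto simp: blists_def)

lemma redb_full: "supp n \<rho> \<Longrightarrow> redb 0 n n \<rho> = \<rho>"
  by (auto simp: redb_def supp_def fun_eq_iff)

lemma red_redb: "j < length ns \<Longrightarrow> red ns j \<rho> = redb (sum_list (take j ns)) (ns!j) (sum_list ns) \<rho>"
proof -
  assume j: "j < length ns"
  define k where "k = sum_list (take j ns)"
  have le: "k + ns!j \<le> sum_list ns"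
  proof -
    have "ns = take j ns @ [ns!j] @ drop (Suc j) ns" using j by (simp add: Cons_nth_drop_Suc)
    hence "sum_list ns = k + ns!j + sum_list (drop (Suc j) ns)"
      unfolding k_def by (metis add.assoc sum_list_append sum_list_simps(1) sum_list_simps(2) add_0_right)
    thus ?thesis by simp
  qed
  have e: "sum_list ns - ns!j = k + (sum_list ns - k - ns!j)" using le by simp
  show ?thesis
    unfolding red_def redb_def k_def[symmetric] Let_def
    by (intro ext, subst e, simp add: sum_split)
qed

lemma sum4_cabd: "(\<Sum>a\<in>A. \<Sum>b\<in>B. \<Sum>c\<in>C. \<Sum>d\<in>D. f a b c d) = (\<Sum>c\<in>C. \<Sum>a\<in>A. \<Sum>b\<in>B. \<Sum>d\<in>D. f a b c d)"
proof -
  have "(\<Sum>a\<in>A. \<Sum>b\<in>B. \<Sum>c\<in>C. \<Sum>d\<in>D. f a b c d) = (\<Sum>a\<in>A. \<Sum>c\<in>C. \<Sum>b\<in>B. \<Sum>d\<in>D. f a b c d)"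
    by (intro sum.cong refl) (rule sum.swap)
  also have "\<dots> = (\<Sum>c\<in>C. \<Sum>a\<in>A. \<Sum>b\<in>B. \<Sum>d\<in>D. f a b c d)"
    by (rule sum.swap)
  finally show ?thesis .
qed

lemma redb_comp:
  assumes "k + l \<le> m'" "k0 + m' \<le> n"
  shows "redb k l m' (redb k0 m' n \<rho>) = redb (k0+k) l n \<rho>"
proof (intro ext)
  fix x y :: "bool list"
  show "redb k l m' (redb k0 m' n \<rho>) x y = redb (k0+k) l n \<rho> x y"
  proof (cases "length x = l \<and> length y = l")
    case True
    have e: "n - (k0 + k + l) = (m' - (k + l)) + (n - (k0 + m'))" using assms by simp
    have "redb k l m' (redb k0 m' n \<rho>) x y =
      (\<Sum>u\<in>blists k. \<Sum>v\<in>blists (m'-k-l). \<Sum>u0\<in>blists k0. \<Sum>v0\<in>blists (n-k0-m'). \<rho> (u0@(u@x@v)@v0) (u0@(u@y@v)@v0))"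
      using True assms by (simp add: redb_def)
    also have "\<dots> = (\<Sum>u0\<in>blists k0. \<Sum>u\<in>blists k. \<Sum>v\<in>blists (m'-k-l). \<Sum>v0\<in>blists (n-k0-m'). \<rho> (u0@(u@x@v)@v0) (u0@(u@y@v)@v0))"
      by (rule sum4_cabd)
    also have "\<dots> = redb (k0+k) l n \<rho> x y"
      using True by (simp add: redb_def e sum_split)
    finally show ?thesis .
  qed (auto simp: redb_def)
qed

lemma redb_tens1:
  assumes "k + l \<le> a"
  shows "redb k l (a+b) (tens a A B) = (\<lambda>x y. trace b B * redb k l a A x y)"
proof (intro ext)
  fix x y :: "bool list"
  show "redb k l (a+b) (tens a A B) x y = trace b B * redb k l a A x y"
  proof (cases "length x = l \<and> length y = l")
    case True
    obtain c where c: "a = k + l + c" using assms le_Suc_ex by blast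
    have "redb k l (a+b) (tens a A B) x y = (\<Sum>u\<in>blists k. \<Sum>v1\<in>blists (a-k-l). \<Sum>v2\<in>blists b.
          A (u@x@v1) (u@y@v1) * B v2 v2)"
      using True unfolding c by (simp add: redb_def sum_split tens_def add.assoc)
    also have "\<dots> = trace b B * redb k l a A x y"
      using True by (simp add: redb_def trace_def sum_distrib_left sum_distrib_right mult_ac)
    finally show ?thesis .
  qed (auto simp: redb_def)
qed

lemma redb_tens2:
  assumes "a \<le> k" "k + l \<le> a + b"
  shows "redb k l (a+b) (tens a A B) = (\<lambda>x y. trace a A * redb (k-a) l b B x y)"
proof (intro ext)
  fix x y :: "bool list"
  show "redb k l (a+b) (tens a A B) x y = trace a A * redb (k-a) l b B x y"
  proof (cases "length x = l \<and> length y = l")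
    case True
    have e: "k = a + (k - a)" using assms by simp
    obtain c where c: "k = a + c" using assms(1) le_Suc_ex by blast
    have "redb k l (a+b) (tens a A B) x y = (\<Sum>u1\<in>blists a. \<Sum>u2\<in>blists (k-a). \<Sum>v\<in>blists (b-(k-a)-l).
          A u1 u1 * B (u2@x@v) (u2@y@v))"
      using True assms unfolding c by (simp add: redb_def sum_split tens_def)
    also have "\<dots> = trace a A * redb (k-a) l b B x y"
      using True by (simp add: redb_def trace_def sum_distrib_left sum_distrib_right mult_ac) (rule sum3_bca)
    finally show ?thesis .
  qed (auto simp: redb_def)
qed



lemma density_redb:
  assumes d: "density n \<rho>" and n: "n = k+m+r"
  shows "density m (redb k m n \<rho>)"
proof -
  have r: "n - (k + m) = r" using n by simp
  have sp: "supp n \<rho>" and h: "herm \<rho>" and p: "psd n \<rho>" and t: "trace n \<rho> = 1"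
    using d by (auto simp: density_iff)
  have s1: "supp m (redb k m n \<rho>)" by (simp add: supp_def redb_def)
  have h1: "herm (redb k m n \<rho>)"
    unfolding herm_def
  proof (intro allI)
    fix x y
    have "cnj (\<rho> a b) = \<rho> b a" for a b using h by (metis herm_def complex_cnj_cnj)
    thus "redb k m n \<rho> x y = cnj (redb k m n \<rho> y x)" by (simp add: redb_def)
  qed
  have t1: "trace m (redb k m n \<rho>) = 1"
  proof -
    have "trace m (redb k m n \<rho>) = (\<Sum>x\<in>blists m. \<Sum>u\<in>blists k. \<Sum>v\<in>blists r. \<rho> (u@x@v) (u@x@v))"
      by (simp add: trace_def redb_def r)
    also have "\<dots> = (\<Sum>u\<in>blists k. \<Sum>x\<in>blists m. \<Sum>v\<in>blists r. \<rho> (u@x@v) (u@x@v))"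
      by (rule sum.swap)
    also have "\<dots> = trace n \<rho>" unfolding trace_def n split3 ..
    finally show ?thesis using t by simp
  qed
  have p1: "psd m (redb k m n \<rho>)"
    unfolding psd_def
  proof
    fix v :: "bool list \<Rightarrow> complex"
    define V where "V u w z = (if take k z = u \<and> drop (k+m) z = w then v (take m (drop k z)) else 0)" for u w z
    have Vv: "V u w (u@x@w) = v x" if "length u = k" "length x = m" for u w x
      using that by (simp add: V_def)
    have inner: "(\<Sum>x\<in>blists m. \<Sum>y\<in>blists m. cnj (v x) * \<rho> (u@x@w) (u@y@w) * v y) =
       (\<Sum>z\<in>blists n. \<Sum>z'\<in>blists n. cnj (V u w z) * \<rho> z z' * V u w z')"
      if u: "length u = k" and w: "length w = r" for u w
    proof -
      have "(\<Sum>z\<in>blists n. \<Sum>z'\<in>blists n. cnj (V u w z) * \<rho> z z' * V u w z') =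
            (\<Sum>x\<in>blists m. \<Sum>z'\<in>blists n. cnj (V u w (u@x@w)) * \<rho> (u@x@w) z' * V u w z')"
        by (rule sum_embed[OF n u w]) (simp add: V_def; blast)
      also have "\<dots> = (\<Sum>x\<in>blists m. \<Sum>y\<in>blists m. cnj (V u w (u@x@w)) * \<rho> (u@x@w) (u@y@w) * V u w (u@y@w))"
        by (rule sum.cong[OF refl], rule sum_embed[OF n u w]) (simp add: V_def; blast)+
      also have "\<dots> = (\<Sum>x\<in>blists m. \<Sum>y\<in>blists m. cnj (v x) * \<rho> (u@x@w) (u@y@w) * v y)"
        using u by (intro sum.cong refl) (simp add: Vv)
      finally show ?thesis by simp
    qed
    have "(\<Sum>x\<in>blists m. \<Sum>y\<in>blists m. cnj (v x) * redb k m n \<rho> x y * v y) =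
          (\<Sum>x\<in>blists m. \<Sum>y\<in>blists m. \<Sum>u\<in>blists k. \<Sum>w\<in>blists r. cnj (v x) * \<rho> (u@x@w) (u@y@w) * v y)"
      by (simp add: redb_def r sum_distrib_left sum_distrib_right)
    also have "\<dots> = (\<Sum>u\<in>blists k. \<Sum>w\<in>blists r. \<Sum>x\<in>blists m. \<Sum>y\<in>blists m. cnj (v x) * \<rho> (u@x@w) (u@y@w) * v y)"
      by (rule sum4_cdab)
    also have "\<dots> = (\<Sum>u\<in>blists k. \<Sum>w\<in>blists r. \<Sum>z\<in>blists n. \<Sum>z'\<in>blists n. cnj (V u w z) * \<rho> z z' * V u w z')"
      by (simp add: inner)
    finally have eq: "(\<Sum>x\<in>blists m. \<Sum>y\<in>blists m. cnj (v x) * redb k m n \<rho> x y * v y) = \<dots>" .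
    have "0 \<le> Re (\<Sum>u\<in>blists k. \<Sum>w\<in>blists r. \<Sum>z\<in>blists n. \<Sum>z'\<in>blists n. cnj (V u w z) * \<rho> z z' * V u w z')"
    proof -
      have q: "0 \<le> Re (\<Sum>z\<in>blists n. \<Sum>z'\<in>blists n. cnj (V u w z) * \<rho> z z' * V u w z')" for u w
        using p unfolding psd_def by blast
      show ?thesis by (subst Re_sum, rule sum_nonneg, subst Re_sum, rule sum_nonneg, rule q)
    qed
    thus "0 \<le> Re (\<Sum>x\<in>blists m. \<Sum>y\<in>blists m. cnj (v x) * redb k m n \<rho> x y * v y)"
      using eq by simp
  qed
  show ?thesis using s1 h1 p1 t1 by (simp add: density_iff)
qed



definition QF :: "'a set \<Rightarrow> ('a \<Rightarrow> 'a \<Rightarrow> complex) \<Rightarrow> ('a \<Rightarrow> complex) \<Rightarrow> complex" where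
  "QF S s v = (\<Sum>x\<in>S. \<Sum>y\<in>S. cnj (v x) * s x y * v y)"

lemma QF_expand:
  assumes "finite S" "a \<in> S"
  shows "QF S s (\<lambda>x. v x + (if x = a then t else 0)) =
     QF S s v + cnj t * (\<Sum>y\<in>S. s a y * v y) + t * (\<Sum>x\<in>S. cnj (v x) * s x a) + cnj t * t * s a a"
proof -
  have "QF S s (\<lambda>x. v x + (if x = a then t else 0)) =
    (\<Sum>x\<in>S. \<Sum>y\<in>S. cnj (v x) * s x y * v y + (if x = a then cnj t * s a y * v y else 0)
        + (if y = a then cnj (v x) * s x a * t else 0) + (if x = a \<and> y = a then cnj t * s a a * t else 0))"
    unfolding QF_def by (intro sum.cong refl) (auto simp: algebra_simps)
  also have "\<dots> = QF S s v + cnj t * (\<Sum>y\<in>S. s a y * v y) + t * (\<Sum>x\<in>S. cnj (v x) * s x a) + cnj t * t * s a a"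
  proof -
    have p2: "(\<Sum>x\<in>S. \<Sum>y\<in>S. (if x = a then cnj t * s a y * v y else 0)) = cnj t * (\<Sum>y\<in>S. s a y * v y)"
    proof -
      have "(\<Sum>y\<in>S. (if x = a then cnj t * s a y * v y else 0)) = (if x = a then cnj t * (\<Sum>y\<in>S. s a y * v y) else 0)" for x
        by (simp add: sum_distrib_left mult_ac)
      thus ?thesis using assms by simp
    qed
    have p3: "(\<Sum>x\<in>S. \<Sum>y\<in>S. (if y = a then cnj (v x) * s x a * t else 0)) = t * (\<Sum>x\<in>S. cnj (v x) * s x a)"
      using assms by (simp add: sum_distrib_left mult_ac)
    have p4: "(\<Sum>x\<in>S. \<Sum>y\<in>S. (if x = a \<and> y = a then cnj t * s a a * t else 0)) = cnj t * t * s a a"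
    proof -
      have "(\<Sum>y\<in>S. (if x = a \<and> y = a then cnj t * s a a * t else 0)) = (if x = a then cnj t * s a a * t else 0)" for x
        using assms by (cases "x = a") simp_all
      thus ?thesis using assms by (simp add: mult_ac)
    qed
    show ?thesis unfolding sum.distrib QF_def p2 p3 p4 ..
  qed
  finally show ?thesis .
qed

definition hermS :: "'a set \<Rightarrow> ('a \<Rightarrow> 'a \<Rightarrow> complex) \<Rightarrow> bool" where
  "hermS S s \<longleftrightarrow> (\<forall>x\<in>S. \<forall>y\<in>S. s x y = cnj (s y x))"

definition psdS :: "'a set \<Rightarrow> ('a \<Rightarrow> 'a \<Rightarrow> complex) \<Rightarrow> bool" where
  "psdS S s \<longleftrightarrow> (\<forall>v. 0 \<le> Re (QF S s v))"

lemma QF_delta: "finite S \<Longrightarrow> y \<in> S \<Longrightarrow> QF S s (\<lambda>x. if x = y then 1 else 0) = s y y"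
proof -
  assume f: "finite S" and y: "y \<in> S"
  have "(\<Sum>ya\<in>S. cnj (if x = y then 1 else 0) * s x ya * (if ya = y then 1 else 0)) = (if x = y then s x y else 0)" for x
    using f y by (cases "x = y") (simp_all add: sum_delta4)
  thus ?thesis unfolding QF_def using f y by simp
qed

lemma psd_diag: "finite S \<Longrightarrow> y \<in> S \<Longrightarrow> psdS S s \<Longrightarrow> 0 \<le> Re (s y y)"
  using QF_delta unfolding psdS_def by metis

lemma row_zero:
  assumes fin: "finite S" and a: "a \<in> S" and h: "hermS S s" and p: "psdS S s" and c: "s a a = 0"
    and y: "y \<in> S"
  shows "s a y = 0"
proof (rule ccontr)
  assume nz: "s a y \<noteq> 0"
  define B where "B = s a y"
  have key: "0 \<le> Re (s y y) + 2 * Re (cnj t * B)" for t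
  proof -
    let ?v = "\<lambda>x. if x = y then 1 else (0::complex)"
    have e1: "(\<Sum>y'\<in>S. s a y' * ?v y') = B" using fin y unfolding B_def
      by (simp add: if_distrib[of "\<lambda>t. _ * t"] cong: if_cong)
    have sy: "s y a = cnj B" using h a y unfolding hermS_def B_def by blast
    have "cnj (?v x) * s x a = (if x = y then 1 else 0) * s x a" for x by simp
    hence e2: "(\<Sum>x\<in>S. cnj (?v x) * s x a) = cnj B" using fin y sy
      by (simp only:) (simp add: sum_delta5)
    have "0 \<le> Re (QF S s (\<lambda>x. ?v x + (if x = a then t else 0)))" using p unfolding psdS_def by blast
    also have "QF S s (\<lambda>x. ?v x + (if x = a then t else 0)) = s y y + cnj t * B + t * cnj B"
      unfolding QF_expand[OF fin a] QF_delta[OF fin y] e1 e2 c by simp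
    also have "Re (s y y + cnj t * B + t * cnj B) = Re (s y y) + 2 * Re (cnj t * B)"
      by simp
    finally show ?thesis .
  qed
  define r where "r = (\<bar>Re (s y y)\<bar> + 1) / (2 * (cmod B)\<^sup>2)"
  have Bpos: "(cmod B)\<^sup>2 > 0" using nz unfolding B_def by simp
  have "Re (cnj (- complex_of_real r * B) * B) = - r * (cmod B)\<^sup>2"
  proof -
    have "cnj (- complex_of_real r * B) * B = - complex_of_real r * (cnj B * B)" by simp
    also have "cnj B * B = complex_of_real ((cmod B)\<^sup>2)" using complex_norm_square[of B] by (simp add: mult.commute)
    finally show ?thesis by (metis Re_complex_of_real of_real_minus of_real_mult mult_minus_left)
  qed
  with key[of "- complex_of_real r * B"] have "0 \<le> Re (s y y) - 2 * r * (cmod B)\<^sup>2" by simp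
  also have "2 * r * (cmod B)\<^sup>2 = \<bar>Re (s y y)\<bar> + 1" unfolding r_def using Bpos by simp
  finally show False by simp
qed

lemma QF_insert_restrict:
  assumes "finite S" "a \<notin> S" "v' a = 0" "\<And>x. x \<in> S \<Longrightarrow> v' x = v x"
  shows "QF (insert a S) s v' = QF S s v"
proof -
  have "QF (insert a S) s v' = (\<Sum>x\<in>S. \<Sum>y\<in>S. cnj (v' x) * s x y * v' y)"
    unfolding QF_def using assms(1-3) by (simp add: sum.insert)
  also have "\<dots> = QF S s v" unfolding QF_def using assms(4) by simp
  finally show ?thesis .
qed

lemma psdS_restrict: "finite S \<Longrightarrow> a \<notin> S \<Longrightarrow> psdS (insert a S) s \<Longrightarrow> psdS S s"
  unfolding psdS_def
proof
  fix v assume f: "finite S" and a: "a \<notin> S" and p: "\<forall>v. 0 \<le> Re (QF (insert a S) s v)"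
  have "QF (insert a S) s (v(a:=0)) = QF S s v"
    by (rule QF_insert_restrict[OF f a]) (use a in auto)
  thus "0 \<le> Re (QF S s v)" using p by metis
qed

lemma hermS_mono: "hermS (insert a S) s \<Longrightarrow> hermS S s"
  unfolding hermS_def by blast

lemma sum_list_zero_fun: "(\<Sum>w\<leftarrow>ws. f w) = (0::complex)" if "\<And>w. f w = 0"
  using that by (induction ws) auto

lemma decomp:
  "finite S \<Longrightarrow> hermS S s \<Longrightarrow> psdS S s \<Longrightarrow> \<exists>ws. \<forall>x\<in>S. \<forall>y\<in>S. s x y = (\<Sum>w\<leftarrow>ws. w x * cnj (w y))"
proof (induction S arbitrary: s rule: finite_induct)
  case empty thus ?case by auto
next
  case (insert a S)
  let ?T = "insert a S"
  have finT: "finite ?T" using insert by simp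
  have aT: "a \<in> ?T" by simp
  have hT: "s x y = cnj (s y x)" if "x \<in> ?T" "y \<in> ?T" for x y
    using insert.prems(1) that unfolding hermS_def by blast
  have re: "0 \<le> Re (s a a)" by (rule psd_diag[OF finT aT insert.prems(2)])
  have im: "Im (s a a) = 0" using arg_cong[OF hT[OF aT aT], of Im] by simp
  show ?case
  proof (cases "s a a = 0")
    case True
    have row: "s a y = 0" if "y \<in> ?T" for y
      by (rule row_zero[OF finT aT insert.prems True that])
    have col: "s x a = 0" if "x \<in> ?T" for x
      using hT[OF that aT] row[OF that] by simp
    obtain ws where ws: "\<forall>x\<in>S. \<forall>y\<in>S. s x y = (\<Sum>w\<leftarrow>ws. w x * cnj (w y))"
      using insert.IH[OF hermS_mono[OF insert.prems(1)] psdS_restrict[OF insert.hyps(1,2) insert.prems(2)]] by blast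
    show ?thesis
    proof (intro exI[of _ "map (\<lambda>w. w(a:=0)) ws"] ballI)
      fix x y assume x: "x \<in> ?T" and y: "y \<in> ?T"
      show "s x y = (\<Sum>w\<leftarrow>map (\<lambda>w. w(a:=0)) ws. w x * cnj (w y))"
      proof (cases "x = a \<or> y = a")
        case True
        thus ?thesis using row[OF y] col[OF x] by (auto simp: o_def intro!: sum_list_zero_fun[symmetric])
      next
        case False
        hence "x \<in> S" "y \<in> S" using x y by auto
        thus ?thesis using ws False by (simp add: o_def)
      qed
    qed
  next
    case False
    define rc where "rc = Re (s a a)"
    have saa: "s a a = complex_of_real rc" using im unfolding rc_def by (simp add: complex_eq_iff)
    have "rc \<noteq> 0" using False saa by auto
    hence rcpos: "rc > 0" using re rc_def by linarith
    define sq where "sq = sqrt rc"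
    have sqpos: "sq > 0" using rcpos unfolding sq_def by simp
    have sqsq: "sq * sq = rc" using rcpos unfolding sq_def by simp
    define w0 where "w0 x = s x a / complex_of_real sq" for x
    define s' where "s' x y = s x y - w0 x * cnj (w0 y)" for x y
    have w0a: "w0 a = complex_of_real sq"
      unfolding w0_def saa using sqpos sqsq by (simp add: field_simps flip: of_real_mult)
    have row': "s' a y = 0" if "y \<in> ?T" for y
    proof -
      have "cnj (w0 y) = s a y / complex_of_real sq" unfolding w0_def using hT[OF aT that] by simp
      thus ?thesis unfolding s'_def w0a using sqpos by (simp add: field_simps)
    qed
    have col': "s' x a = 0" if "x \<in> ?T" for x
    proof -
      have e: "cnj (s a a) = complex_of_real sq * complex_of_real sq"
        using saa sqsq by (metis complex_cnj_complex_of_real of_real_mult)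
      have "w0 x * cnj (w0 a) = s x a" unfolding w0_def using sqpos by (simp add: e)
      thus ?thesis unfolding s'_def by simp
    qed
    have h': "hermS ?T s'" unfolding hermS_def s'_def
    proof (intro ballI)
      fix x y assume "x \<in> ?T" "y \<in> ?T"
      hence hh: "s x y = cnj (s y x)" by (rule hT)
      show "s x y - w0 x * cnj (w0 y) = cnj (s y x - w0 y * cnj (w0 x))" by (simp only: hh) simp
    qed
    have p': "psdS ?T s'"
      unfolding psdS_def
    proof
      fix v
      define L where "L u = (\<Sum>x\<in>?T. cnj (u x) * w0 x)" for u
      have QL: "QF ?T s' u = QF ?T s u - L u * cnj (L u)" for u
      proof -
        have "QF ?T s' u = QF ?T s u - (\<Sum>x\<in>?T. \<Sum>y\<in>?T. (cnj (u x) * w0 x) * (cnj (w0 y) * u y))"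
          unfolding QF_def s'_def by (simp add: algebra_simps sum_subtractf)
        also have "(\<Sum>x\<in>?T. \<Sum>y\<in>?T. (cnj (u x) * w0 x) * (cnj (w0 y) * u y)) = L u * cnj (L u)"
          unfolding L_def by (simp add: sum_product mult_ac) (rule sum.swap)
        finally show ?thesis .
      qed
      define t where "t = - cnj (L v) / complex_of_real sq"
      define u where "u x = v x + (if x = a then t else 0)" for x
      have Lu: "L u = 0"
      proof -
        have "L u = L v + cnj t * w0 a"
          unfolding L_def u_def using finT aT
          by (simp add: distrib_right sum.distrib if_distrib[of cnj] if_distrib[of "\<lambda>z. z * _"] cong: if_cong)
        also have "cnj t * w0 a = - L v" unfolding t_def w0a using sqpos by simp
        finally show ?thesis by simp
      qed
      have "QF ?T s' u = QF ?T s' v"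
        unfolding u_def QF_expand[OF finT aT] using row' col' aT by simp
      hence "QF ?T s' v = QF ?T s u" using QL[of u] Lu by simp
      moreover have "0 \<le> Re (QF ?T s u)" using insert.prems(2) unfolding psdS_def by blast
      ultimately show "0 \<le> Re (QF ?T s' v)" by simp
    qed
    obtain ws where ws: "\<forall>x\<in>S. \<forall>y\<in>S. s' x y = (\<Sum>w\<leftarrow>ws. w x * cnj (w y))"
      using insert.IH[OF hermS_mono[OF h'] psdS_restrict[OF insert.hyps(1,2) p']] by blast
    show ?thesis
    proof (intro exI[of _ "w0 # map (\<lambda>w. w(a:=0)) ws"] ballI)
      fix x y assume x: "x \<in> ?T" and y: "y \<in> ?T"
      have sxy: "s x y = w0 x * cnj (w0 y) + s' x y" unfolding s'_def by simp
      have "s' x y = (\<Sum>w\<leftarrow>map (\<lambda>w. w(a:=0)) ws. w x * cnj (w y))"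
      proof (cases "x = a \<or> y = a")
        case True
        thus ?thesis using row'[OF y] col'[OF x] by (auto simp: o_def intro!: sum_list_zero_fun[symmetric])
      next
        case False
        hence "x \<in> S" "y \<in> S" using x y by auto
        thus ?thesis using ws False by (simp add: o_def)
      qed
      thus "s x y = (\<Sum>w\<leftarrow>w0 # map (\<lambda>w. w(a:=0)) ws. w x * cnj (w y))" using sxy by simp
    qed
  qed
qed



lemma sum3_cab: "(\<Sum>a\<in>A. \<Sum>b\<in>B. \<Sum>c\<in>C. f a b c) = (\<Sum>c\<in>C. \<Sum>a\<in>A. \<Sum>b\<in>B. f a b c)"
proof -
  have "(\<Sum>a\<in>A. \<Sum>b\<in>B. \<Sum>c\<in>C. f a b c) = (\<Sum>a\<in>A. \<Sum>c\<in>C. \<Sum>b\<in>B. f a b c)"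
    by (rule sum.cong[OF refl], rule sum.swap)
  also have "\<dots> = (\<Sum>c\<in>C. \<Sum>a\<in>A. \<Sum>b\<in>B. f a b c)"
    by (rule sum.swap)
  finally show ?thesis .
qed

lemma trace_tens: "trace (a+b) (tens a A B) = trace a A * trace b B"
  by (simp add: trace_def sum_split tens_def sum_product)

lemma density_tens:
  assumes da: "density a \<rho>" and db: "density b \<sigma>"
  shows "density (a+b) (tens a \<rho> \<sigma>)"
proof -
  have sa: "supp a \<rho>" and ha: "herm \<rho>" and pa: "psd a \<rho>" and ta: "trace a \<rho> = 1"
    using da by (auto simp: density_iff)
  have sb: "supp b \<sigma>" and hb: "herm \<sigma>" and pb: "psd b \<sigma>" and tb: "trace b \<sigma> = 1"
    using db by (auto simp: density_iff)
  have s: "supp (a+b) (tens a \<rho> \<sigma>)" by (rule supp_tens[OF sa sb])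
  have h: "herm (tens a \<rho> \<sigma>)" using ha hb unfolding herm_def tens_def by (metis complex_cnj_mult)
  have t: "trace (a+b) (tens a \<rho> \<sigma>) = 1" using ta tb by (simp add: trace_tens)
  have hS: "hermS (blists b) \<sigma>" using hb unfolding herm_def hermS_def by blast
  have pS: "psdS (blists b) \<sigma>" using pb unfolding psd_def psdS_def QF_def by blast
  obtain ws where ws: "\<forall>x\<in>blists b. \<forall>y\<in>blists b. \<sigma> x y = (\<Sum>w\<leftarrow>ws. w x * cnj (w y))"
    using decomp[OF finite_blists hS pS] by blast
  define N where "N = length ws"
  define W where "W i = ws ! i" for i
  have sig: "\<sigma> x y = (\<Sum>i<N. W i x * cnj (W i y))" if "length x = b" "length y = b" for x y
    using ws that unfolding N_def W_def by (simp add: sum_list_sum_nth atLeast0LessThan)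
  have p: "psd (a+b) (tens a \<rho> \<sigma>)"
    unfolding psd_def
  proof
    fix v :: "bool list \<Rightarrow> complex"
    define V where "V i x1 = (\<Sum>y2\<in>blists b. cnj (W i y2) * v (x1@y2))" for i x1
    let ?F = "\<lambda>x1 x2 y1 y2 i. cnj (v (x1@x2)) * \<rho> x1 y1 * (W i x2 * cnj (W i y2)) * v (y1@y2)"
    have "(\<Sum>x\<in>blists (a+b). \<Sum>y\<in>blists (a+b). cnj (v x) * tens a \<rho> \<sigma> x y * v y) =
       (\<Sum>x1\<in>blists a. \<Sum>x2\<in>blists b. \<Sum>y1\<in>blists a. \<Sum>y2\<in>blists b. cnj (v (x1@x2)) * \<rho> x1 y1 * \<sigma> x2 y2 * v (y1@y2))"
      by (simp add: sum_split tens_def mult_ac)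
    also have "\<dots> = (\<Sum>x1\<in>blists a. \<Sum>x2\<in>blists b. \<Sum>y1\<in>blists a. \<Sum>y2\<in>blists b. \<Sum>i<N. ?F x1 x2 y1 y2 i)"
      by (simp add: sig sum_distrib_left sum_distrib_right)
    also have "\<dots> = (\<Sum>x1\<in>blists a. \<Sum>y1\<in>blists a. \<Sum>x2\<in>blists b. \<Sum>y2\<in>blists b. \<Sum>i<N. ?F x1 x2 y1 y2 i)"
      by (rule sum.cong[OF refl], rule sum.swap)
    also have "\<dots> = (\<Sum>x1\<in>blists a. \<Sum>y1\<in>blists a. \<Sum>i<N. \<Sum>x2\<in>blists b. \<Sum>y2\<in>blists b. ?F x1 x2 y1 y2 i)"
      by (rule sum.cong[OF refl], rule sum.cong[OF refl], rule sum3_cab)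
    also have "\<dots> = (\<Sum>i<N. \<Sum>x1\<in>blists a. \<Sum>y1\<in>blists a. \<Sum>x2\<in>blists b. \<Sum>y2\<in>blists b. ?F x1 x2 y1 y2 i)"
      by (rule sum3_cab)
    also have "\<dots> = (\<Sum>i<N. \<Sum>x1\<in>blists a. \<Sum>y1\<in>blists a. cnj (V i x1) * \<rho> x1 y1 * V i y1)"
      unfolding V_def by (simp add: sum_distrib_left sum_distrib_right mult_ac)
    finally have eq: "(\<Sum>x\<in>blists (a+b). \<Sum>y\<in>blists (a+b). cnj (v x) * tens a \<rho> \<sigma> x y * v y) = \<dots>" .
    have "0 \<le> Re (\<Sum>i<N. \<Sum>x1\<in>blists a. \<Sum>y1\<in>blists a. cnj (V i x1) * \<rho> x1 y1 * V i y1)"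
    proof -
      have q: "0 \<le> Re (\<Sum>x1\<in>blists a. \<Sum>y1\<in>blists a. cnj (V i x1) * \<rho> x1 y1 * V i y1)" for i
        using pa unfolding psd_def by blast
      show ?thesis by (subst Re_sum, rule sum_nonneg, rule q)
    qed
    thus "0 \<le> Re (\<Sum>x\<in>blists (a+b). \<Sum>y\<in>blists (a+b). cnj (v x) * tens a \<rho> \<sigma> x y * v y)"
      using eq by simp
  qed
  show ?thesis using s h p t by (simp add: density_iff)
qed



lemma blists_1: "blists 1 = {[False],[True]}"
proof (rule set_eqI)
  fix xs :: "bool list"
  show "xs \<in> blists 1 \<longleftrightarrow> xs \<in> {[False],[True]}"
    by (cases xs) (auto simp: blists_def)
qed

lemma blists_Suc0: "blists (Suc 0) = {[False],[True]}" using blists_1 by simp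

lemma sum_prod_blists: "(\<Sum>z\<in>blists n. \<Prod>i<n. f i (z!i)) = (\<Prod>i<n. f i False + f i True :: complex)"
proof (induction n arbitrary: f)
  case 0 thus ?case by simp
next
  case (Suc n)
  have "(\<Sum>z\<in>blists (Suc n). \<Prod>i<Suc n. f i (z!i)) = (\<Sum>u\<in>blists 1. \<Sum>v\<in>blists n. \<Prod>i<Suc n. f i ((u@v)!i))"
    using sum_split[where a=1 and b=n] by simp
  also have "\<dots> = (\<Sum>u\<in>blists 1. \<Sum>v\<in>blists n. f 0 (hd u) * (\<Prod>i<n. f (Suc i) (v!i)))"
    by (intro sum.cong refl) (auto simp: length_Suc_conv prod.lessThan_Suc_shift simp del: prod.lessThan_Suc)
  also have "\<dots> = (f 0 False + f 0 True) * (\<Sum>v\<in>blists n. \<Prod>i<n. f (Suc i) (v!i))"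
    by (simp add: blists_Suc0 sum_distrib_left distrib_right sum.distrib)
  also have "\<dots> = (f 0 False + f 0 True) * (\<Prod>i<n. f (Suc i) False + f (Suc i) True)"
    using Suc[of "\<lambda>i. f (Suc i)"] by simp
  also have "\<dots> = (\<Prod>i<Suc n. f i False + f i True)"
    by (simp add: prod.lessThan_Suc_shift del: prod.lessThan_Suc)
  finally show ?case .
qed

lemma prod_delta: "length x = n \<Longrightarrow> length y = n \<Longrightarrow>
   (\<Prod>i<n. (if x!i = y!i then 1 else 0::complex)) = (if x = y then 1 else 0)"
proof -
  assume lx: "length x = n" and ly: "length y = n"
  show ?thesis
  proof (cases "x = y")
    case True thus ?thesis by simp
  next
    case False
    then obtain i where "i < n" "x!i \<noteq> y!i" using lx ly nth_equalityI by metis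
    thus ?thesis using False by (intro trans[OF prod_zero]) auto
  qed
qed

lemma UNIV_bool_sum: "(\<Sum>c\<in>(UNIV::bool set). f c) = f False + f True"
  by (simp add: UNIV_bool)

lemma uni_Tn: "unitary2 U \<Longrightarrow> uni n (Tn U n)"
proof -
  assume u: "unitary2 U"
  have u1: "U a False * cnj (U b False) + U a True * cnj (U b True) = (if a = b then 1 else 0)" for a b
    using u unfolding unitary2_def UNIV_bool_sum by blast
  have u2: "cnj (U False a) * U False b + cnj (U True a) * U True b = (if a = b then 1 else 0)" for a b
    using u unfolding unitary2_def UNIV_bool_sum by blast
  have s: "supp n (Tn U n)" by (simp add: supp_def Tn_def)
  have A: "mult n (adj (Tn U n)) (Tn U n) = id_op n"
  proof (intro ext)
    fix x y :: "bool list"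
    show "mult n (adj (Tn U n)) (Tn U n) x y = id_op n x y"
    proof (cases "length x = n \<and> length y = n")
      case True
      have "mult n (adj (Tn U n)) (Tn U n) x y = (\<Sum>z\<in>blists n. \<Prod>i<n. cnj (U (z!i) (x!i)) * U (z!i) (y!i))"
        using True by (simp add: mult_def adj_def Tn_def prod.distrib)
      also have "\<dots> = (\<Prod>i<n. (if x!i = y!i then 1 else 0))"
        using sum_prod_blists[where f="\<lambda>i c. cnj (U c (x!i)) * U c (y!i)"] by (simp add: u2)
      also have "\<dots> = id_op n x y" using True by (simp add: prod_delta id_op_def)
      finally show ?thesis .
    qed (auto simp: mult_def id_op_def)
  qed
  have B: "mult n (Tn U n) (adj (Tn U n)) = id_op n"
  proof (intro ext)
    fix x y :: "bool list"
    show "mult n (Tn U n) (adj (Tn U n)) x y = id_op n x y"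
    proof (cases "length x = n \<and> length y = n")
      case True
      have "mult n (Tn U n) (adj (Tn U n)) x y = (\<Sum>z\<in>blists n. \<Prod>i<n. U (x!i) (z!i) * cnj (U (y!i) (z!i)))"
        using True by (simp add: mult_def adj_def Tn_def prod.distrib)
      also have "\<dots> = (\<Prod>i<n. (if x!i = y!i then 1 else 0))"
        using sum_prod_blists[where f="\<lambda>i c. U (x!i) c * cnj (U (y!i) c)"] by (simp add: u1)
      also have "\<dots> = id_op n x y" using True by (simp add: prod_delta id_op_def)
      finally show ?thesis .
    qed (auto simp: mult_def id_op_def)
  qed
  show ?thesis using s A B by (simp add: uni_def)
qed



lemma uni_perm:
  assumes f: "\<And>y. length y = n \<Longrightarrow> length (f y) = n \<and> f (f y) = y"
  shows "uni n (perm_gate n f)"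
proof -
  have s: "supp n (perm_gate n f)" by (simp add: supp_def perm_gate_def)
  have A: "mult n (adj (perm_gate n f)) (perm_gate n f) x y = id_op n x y" for x y
  proof (cases "length x = n \<and> length y = n")
    case True
    have "mult n (adj (perm_gate n f)) (perm_gate n f) x y = (\<Sum>z\<in>blists n. (if z = f x then 1 else 0) * (if z = f y then 1 else 0))"
    proof (unfold mult_def, simp only: True simp_thms if_True, intro sum.cong refl)
      fix z assume z: "z \<in> blists n"
      thus "adj (perm_gate n f) x z * perm_gate n f z y = (if z = f x then 1 else 0) * (if z = f y then 1 else 0)"
        using z True f by (simp add: perm_gate_def adj_def)
    qed
    also have "\<dots> = (if f x = f y then 1 else 0)"
    proof -
      have "f x \<in> blists n" using f True by simp
      thus ?thesis by (simp add: sum_delta5)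
    qed
    also have "\<dots> = id_op n x y"
    proof -
      have "f x = f y \<longleftrightarrow> x = y" using f True by metis
      thus ?thesis using True by (simp add: id_op_def)
    qed
    finally show ?thesis .
  next
    case False
    have "id_op n x y = 0" using False by (auto simp: id_op_def)
    thus ?thesis by (simp only: mult_def if_not_P[OF False])
  qed
  have B: "mult n (perm_gate n f) (adj (perm_gate n f)) x y = id_op n x y" for x y
  proof (cases "length x = n \<and> length y = n")
    case True
    have "mult n (perm_gate n f) (adj (perm_gate n f)) x y = (\<Sum>z\<in>blists n. (if z = f x then 1 else 0) * (if y = f z then 1 else 0))"
    proof (unfold mult_def, simp only: True simp_thms if_True, intro sum.cong refl)
      fix z assume z: "z \<in> blists n"
      have fz: "f (f z) = z" using f z by simp
      have fx: "f (f x) = x" using f True by simp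
      have "x = f z \<longleftrightarrow> z = f x" using fz fx by metis
      thus "perm_gate n f x z * adj (perm_gate n f) z y = (if z = f x then 1 else 0) * (if y = f z then 1 else 0)"
        using z True by (simp add: perm_gate_def adj_def)
    qed
    also have "\<dots> = (if y = f (f x) then 1 else 0)"
    proof -
      have "f x \<in> blists n" using f True by simp
      thus ?thesis by (simp add: sum_delta5)
    qed
    also have "\<dots> = id_op n x y"
    proof -
      have "f (f x) = x" using f True by simp
      thus ?thesis using True by (auto simp: id_op_def)
    qed
    finally show ?thesis .
  next
    case False
    have "id_op n x y = 0" using False by (auto simp: id_op_def)
    thus ?thesis by (simp only: mult_def if_not_P[OF False])
  qed
  show ?thesis using s A B by (simp add: uni_def fun_eq_iff)
qed



definition loc :: "nat \<Rightarrow> (bool \<Rightarrow> bool \<Rightarrow> complex) \<Rightarrow> op" where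
  "loc n g = (\<lambda>x y. if length x = n \<and> length y = n \<and> butlast x = butlast y then g (last x) (last y) else 0)"

lemma sum_butlast:
  assumes n: "n \<ge> 1" and p: "length p = n - 1"
  shows "(\<Sum>z\<in>blists n. if butlast z = p then h z else 0) = h (p@[False]) + (h (p@[True]) :: complex)"
proof -
  have e: "n = (n-1) + 1" using n by simp
  have "(\<Sum>z\<in>blists n. if butlast z = p then h z else 0) =
        (\<Sum>u\<in>blists (n-1). \<Sum>v\<in>blists 1. if butlast (u@v) = p then h (u@v) else 0)"
    by (subst e, rule sum_split)
  also have "\<dots> = (\<Sum>u\<in>blists (n-1). if u = p then h (u@[False]) + h (u@[True]) else 0)"
    by (intro sum.cong refl) (simp add: blists_Suc0)
  also have "\<dots> = h (p@[False]) + h (p@[True])" using p by simp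
  finally show ?thesis .
qed

lemma last_eq_iff: "length x = length y \<Longrightarrow> x \<noteq> [] \<Longrightarrow> butlast x = butlast y \<Longrightarrow> x = y \<longleftrightarrow> last x = last y"
  by (metis append_butlast_last_id length_0_conv)

lemma locA1: assumes "length x = n" "length y = n" "butlast x = butlast y"
  shows "mult n (adj (loc n g)) (loc n g) x y = (\<Sum>z\<in>blists n. if butlast z = butlast x then cnj (g (last z) (last x)) * g (last z) (last y) else 0)"
  unfolding mult_def using assms(1,2) apply (simp only: simp_thms if_True)
  apply (rule sum.cong[OF refl])
  using assms by (simp add: adj_def loc_def)

lemma locA2: assumes "length x = n" "length y = n" "butlast x \<noteq> butlast y"
  shows "mult n (adj (loc n g)) (loc n g) x y = 0"
proof -
  have "mult n (adj (loc n g)) (loc n g) x y = (\<Sum>z\<in>blists n. 0)"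
    unfolding mult_def using assms(1,2) apply (simp only: simp_thms if_True)
    apply (rule sum.cong[OF refl])
    using assms by (simp add: adj_def loc_def)
  thus ?thesis by simp
qed

lemma locB1: assumes "length x = n" "length y = n" "butlast x = butlast y"
  shows "mult n (loc n g) (adj (loc n g)) x y = (\<Sum>z\<in>blists n. if butlast z = butlast x then g (last x) (last z) * cnj (g (last y) (last z)) else 0)"
  unfolding mult_def using assms(1,2) apply (simp only: simp_thms if_True)
  apply (rule sum.cong[OF refl])
  using assms by (simp add: adj_def loc_def)

lemma locB2: assumes "length x = n" "length y = n" "butlast x \<noteq> butlast y"
  shows "mult n (loc n g) (adj (loc n g)) x y = 0"
proof -
  have "mult n (loc n g) (adj (loc n g)) x y = (\<Sum>z\<in>blists n. 0)"
    unfolding mult_def using assms(1,2) apply (simp only: simp_thms if_True)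
    apply (rule sum.cong[OF refl])
    using assms by (simp add: adj_def loc_def, metis)
  thus ?thesis by simp
qed

lemma uni_loc:
  assumes n: "n \<ge> 1" and g: "unitary2 g"
  shows "uni n (loc n g)"
proof -
  have g1: "g a False * cnj (g b False) + g a True * cnj (g b True) = (if a = b then 1 else 0)" for a b
    using g unfolding unitary2_def UNIV_bool_sum by blast
  have g2: "cnj (g False a) * g False b + cnj (g True a) * g True b = (if a = b then 1 else 0)" for a b
    using g unfolding unitary2_def UNIV_bool_sum by blast
  have s: "supp n (loc n g)" by (simp add: supp_def loc_def)
  have idv: "id_op n x y = (if butlast x = butlast y \<and> last x = last y then 1 else 0)" if "length x = n" "length y = n" for x y
  proof -
    have ne: "x \<noteq> []" using that n by auto
    have "x = y \<longleftrightarrow> butlast x = butlast y \<and> last x = last y"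
      using last_eq_iff[of x y] ne that by auto
    thus ?thesis using that by (simp add: id_op_def)
  qed
  have A: "mult n (adj (loc n g)) (loc n g) x y = id_op n x y" for x y
  proof (cases "length x = n \<and> length y = n")
    case True
    show ?thesis
    proof (cases "butlast x = butlast y")
      case bt: True
      have "length (butlast x) = n - 1" using True by simp
      thus ?thesis using True bt by (simp add: locA1 sum_butlast[OF n] g2 idv)
    next
      case bt: False
      thus ?thesis using True by (simp add: locA2 idv)
    qed
  next
    case False
    have "id_op n x y = 0" using False by (auto simp: id_op_def)
    thus ?thesis by (simp only: mult_def if_not_P[OF False])
  qed
  have B: "mult n (loc n g) (adj (loc n g)) x y = id_op n x y" for x y
  proof (cases "length x = n \<and> length y = n")
    case True
    show ?thesis
    proof (cases "butlast x = butlast y")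
      case bt: True
      have "length (butlast x) = n - 1" using True by simp
      thus ?thesis using True bt by (simp add: locB1 sum_butlast[OF n] g1 idv)
    next
      case bt: False
      thus ?thesis using True by (simp add: locB2 idv)
    qed
  next
    case False
    have "id_op n x y = 0" using False by (auto simp: id_op_def)
    thus ?thesis by (simp only: mult_def if_not_P[OF False])
  qed
  show ?thesis using s A B by (simp add: uni_def fun_eq_iff)
qed



definition gSQI :: "bool \<Rightarrow> bool \<Rightarrow> complex" where
  "gSQI b c = (if b = c then (if c then -1 else 1) else 1) / complex_of_real (sqrt 2)"

definition gSQNOT :: "bool \<Rightarrow> bool \<Rightarrow> complex" where
  "gSQNOT b c = (if b = c then (1 - \<i>) / 2 else (1 + \<i>) / 2)"

lemma SQI_loc: "SQI_g n = loc n gSQI"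
  by (simp add: SQI_g_def loc_def gSQI_def fun_eq_iff)

lemma SQNOT_loc: "SQNOT_g n = loc n gSQNOT"
  by (simp add: SQNOT_g_def loc_def gSQNOT_def fun_eq_iff)

lemma sqrt2c: "complex_of_real (sqrt 2) * complex_of_real (sqrt 2) = 2"
  by (metis of_real_mult real_sqrt_mult_self of_real_numeral abs_numeral real_sqrt_abs2 real_sqrt_mult)

lemma unitary_gSQI: "unitary2 gSQI"
proof -
  have c: "cnj (complex_of_real (sqrt 2)) = complex_of_real (sqrt 2)" by simp
  have "\<forall>a b. gSQI a False * cnj (gSQI b False) + gSQI a True * cnj (gSQI b True) = (if a = b then 1 else 0)"
    by (intro allI, case_tac a; case_tac b) (simp_all add: gSQI_def field_simps sqrt2c)
  moreover have "\<forall>a b. cnj (gSQI False a) * gSQI False b + cnj (gSQI True a) * gSQI True b = (if a = b then 1 else 0)"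
    by (intro allI, case_tac a; case_tac b) (simp_all add: gSQI_def field_simps sqrt2c)
  ultimately show ?thesis unfolding unitary2_def UNIV_bool_sum by blast
qed

lemma unitary_gSQNOT: "unitary2 gSQNOT"
proof -
  have "\<forall>a b. gSQNOT a False * cnj (gSQNOT b False) + gSQNOT a True * cnj (gSQNOT b True) = (if a = b then 1 else 0)"
    by (intro allI, case_tac a; case_tac b) (simp_all add: gSQNOT_def field_simps complex_eq_iff)
  moreover have "\<forall>a b. cnj (gSQNOT False a) * gSQNOT False b + cnj (gSQNOT True a) * gSQNOT True b = (if a = b then 1 else 0)"
    by (intro allI, case_tac a; case_tac b) (simp_all add: gSQNOT_def field_simps complex_eq_iff)
  ultimately show ?thesis unfolding unitary2_def UNIV_bool_sum by blast
qed

lemma cancel1: "uni n T \<Longrightarrow> supp n X \<Longrightarrow> mult n (adj T) (mult n T X) = X"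
  by (metis mult_assoc uni_def mult_id_left)

lemma cancel2: "uni n T \<Longrightarrow> supp n X \<Longrightarrow> mult n T (mult n (adj T) X) = X"
  by (metis mult_assoc uni_def mult_id_left)

lemma uni_adj: "uni n T \<Longrightarrow> uni n (adj T)"
  by (simp add: uni_def supp_adj)

lemma uni_conj:
  assumes T: "uni n T" and G: "uni n G"
  shows "uni n (mult n (mult n T G) (adj T))"
proof -
  have sT: "supp n T" "supp n (adj T)" "supp n G" "supp n (adj G)"
    using T G by (auto simp: uni_def supp_adj)
  let ?C = "mult n (mult n T G) (adj T)"
  have adjC: "adj ?C = mult n T (mult n (adj G) (adj T))"
    by (simp add: adj_mult mult_assoc)
  have 1: "mult n (adj ?C) ?C = id_op n"
  proof -
    have "mult n (adj ?C) ?C = mult n T (mult n (adj G) (mult n (adj T) (mult n T (mult n G (adj T)))))"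
      by (simp add: adj_mult mult_assoc)
    also have "\<dots> = mult n T (mult n (adj G) (mult n G (adj T)))"
      using T sT by (simp add: cancel1)
    also have "\<dots> = mult n T (adj T)" using G sT by (simp add: cancel1)
    also have "\<dots> = id_op n" using T by (simp add: uni_def)
    finally show ?thesis .
  qed
  have 2: "mult n ?C (adj ?C) = id_op n"
  proof -
    have "mult n ?C (adj ?C) = mult n T (mult n G (mult n (adj T) (mult n T (mult n (adj G) (adj T)))))"
      by (simp add: adj_mult mult_assoc)
    also have "\<dots> = mult n T (mult n G (mult n (adj G) (adj T)))"
      using T sT by (simp add: cancel1)
    also have "\<dots> = mult n T (adj T)" using uni_adj[OF G] sT by (metis cancel1 adj_adj)
    also have "\<dots> = id_op n" using T by (simp add: uni_def)
    finally show ?thesis .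
  qed
  show ?thesis using 1 2 by (simp add: uni_def)
qed

lemma At_pos: "At a \<ge> 1"
  by (induction a) auto

lemma NOT_inv: "uni n (NOT_g n)" if "n \<ge> 1"
  unfolding NOT_g_def
proof (rule uni_perm)
  fix y :: "bool list" assume "length y = n"
  hence "y \<noteq> []" using that by auto
  thus "length (butlast y @ [\<not> last y]) = n \<and> butlast (butlast y @ [\<not> last y]) @ [\<not> last (butlast y @ [\<not> last y])] = y"
    using \<open>length y = n\<close> that by simp
qed

lemma XOR_inv: "uni (m+n) (XOR_g m n)" if "m \<ge> 1" "n \<ge> 1"
  unfolding XOR_g_def
proof (rule uni_perm)
  fix w :: "bool list" assume l: "length w = m + n"
  hence ne: "w \<noteq> []" using that by auto
  have i: "m - 1 < length (butlast w)" using l that by simp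
  let ?f = "\<lambda>w. butlast w @ [w ! (m - 1) \<noteq> last w]"
  have b: "(a = (a = L)) = L" for a L :: bool by auto
  have "?f w ! (m-1) = w ! (m-1)" using i by (simp add: nth_append nth_butlast)
  thus "length (?f w) = m + n \<and> ?f (?f w) = w"
    using l ne that by (simp add: b)
qed

lemma TOFF_inv: "uni (m+n+p) (TOFF_g m n p)" if "m \<ge> 1" "n \<ge> 1" "p \<ge> 1"
  unfolding TOFF_g_def
proof (rule uni_perm)
  fix w :: "bool list" assume l: "length w = m + n + p"
  hence ne: "w \<noteq> []" using that by auto
  have i: "m - 1 < length (butlast w)" "m + n - 1 < length (butlast w)" using l that by simp_all
  let ?f = "\<lambda>w. butlast w @ [(w ! (m - 1) \<and> w ! (m + n - 1)) \<noteq> last w]"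
  have b: "(a = (a = L)) = L" for a L :: bool by auto
  have "?f w ! (m-1) = w ! (m-1)" "?f w ! (m+n-1) = w ! (m+n-1)" using i by (simp_all add: nth_append nth_butlast)
  thus "length (?f w) = m + n + p \<and> ?f (?f w) = w"
    using l ne that by (simp add: b)
qed

lemma conjT_apply: "conjT U n G = apply_op n (Tn U n) G"
  by (simp add: conjT_def apply_op_def)

lemma uni_gate_of: "unitary2 U \<Longrightarrow> uni (At b) (gate_of U b)"
proof (cases b)
  case (Atom k) thus ?thesis by (simp add: uni_id)
next
  case Tt thus ?thesis by (simp add: uni_id)
next
  case Ff thus ?thesis by (simp add: uni_id)
next
  case (Neg a) assume u: "unitary2 U"
  thus ?thesis using Neg uni_conj[OF uni_Tn[OF u] NOT_inv[OF At_pos]] by (simp add: conjT_def)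
next
  case (SqId a) assume u: "unitary2 U"
  thus ?thesis using SqId uni_conj[OF uni_Tn[OF u] uni_loc[OF At_pos unitary_gSQI]] by (simp add: conjT_def SQI_loc)
next
  case (SqNeg a) assume u: "unitary2 U"
  thus ?thesis using SqNeg uni_conj[OF uni_Tn[OF u] uni_loc[OF At_pos unitary_gSQNOT]] by (simp add: conjT_def SQNOT_loc)
next
  case (Xor a c) assume u: "unitary2 U"
  thus ?thesis using Xor uni_conj[OF uni_Tn[OF u] XOR_inv[OF At_pos At_pos]] by (simp add: conjT_def)
next
  case (Toff a c d) assume u: "unitary2 U"
  thus ?thesis using Toff uni_conj[OF uni_Tn[OF u] TOFF_inv[OF At_pos At_pos At_pos]] by (simp add: conjT_def)
qed



abbreviation sumAt :: "form list \<Rightarrow> nat" where "sumAt L \<equiv> sum_list (map At L)"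
abbreviation Ex :: "nat \<Rightarrow> form list \<Rightarrow> form list" where "Ex s \<equiv> expand_all ^^ s"

lemma expand_all_append[simp]: "expand_all (xs@ys) = expand_all xs @ expand_all ys"
  by (simp add: expand_all_def)

lemma Ex_append: "Ex s (xs@ys) = Ex s xs @ Ex s ys"
  by (induction s) auto

lemma sumAt_expand: "sumAt (expand_all xs) = sumAt xs"
proof (induction xs)
  case Nil thus ?case by (simp add: expand_all_def)
next
  case (Cons x xs)
  have "sumAt (expand x) = At x"
    by (cases x) (simp_all add: expand_def)
  thus ?case using Cons by (simp add: expand_all_def)
qed

lemma sumAt_Ex: "sumAt (Ex s xs) = sumAt xs"
  by (induction s) (auto simp: sumAt_expand)

lemma level_Ex: "level a i = Ex (i-1) [a]" by (simp add: level_def)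

lemma Ex_add: "Ex s (Ex t L) = Ex (s+t) L" by (simp add: funpow_add)

lemma Ex_Suc_right: "Ex (Suc s) L = Ex s (expand_all L)"
  by (simp add: funpow_Suc_right del: funpow.simps)

lemma expand_all_atomic: "(\<forall>e\<in>set L. atomic e) \<Longrightarrow> expand_all L = L"
  by (induction L) (auto simp: expand_all_def expand_def)

lemma Ex_atomic: "(\<forall>e\<in>set L. atomic e) \<Longrightarrow> Ex s L = L"
  by (induction s) (auto simp: expand_all_atomic)

lemma expand_all_single: "\<not> atomic a \<Longrightarrow> expand_all [a] = args a"
  by (simp add: expand_all_def expand_def)

lemma expand_all_single_atomic: "atomic a \<Longrightarrow> expand_all [a] = [a]"
  by (simp add: expand_all_def expand_def)

lemma sumAt_args: "\<not> atomic a \<Longrightarrow> sumAt (args a) = At a"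
  by (cases a) auto

lemma height_pos: "height a \<ge> 1" by (induction a) auto

lemma set_expand_all: "set (expand_all L) = (\<Union>f\<in>set L. set (expand f))"
  by (simp add: expand_all_def)

lemma Ex_Suc: "Ex (Suc s) L = expand_all (Ex s L)" by simp

lemma subf_trans: "e \<in> subf f \<Longrightarrow> f \<in> subf g \<Longrightarrow> e \<in> subf g"
  by (induction g) auto

lemma height_gt0: "0 < height a" using height_pos[of a] by simp

lemma height_atomic: "atomic a \<longleftrightarrow> height a = 1"
  by (cases a) (auto simp: height_gt0)

lemma height_args: "e \<in> set (args a) \<Longrightarrow> height e < height a"
  by (cases a) auto

lemma height_Ex: "e \<in> set (Ex s [g]) \<Longrightarrow> height e + s \<le> height g \<or> atomic e"
proof (induction s arbitrary: e)
  case 0 thus ?case by simp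
next
  case (Suc s)
  have "e \<in> (\<Union>f\<in>set (Ex s [g]). set (expand f))"
    using Suc.prems by (simp only: Ex_Suc set_expand_all)
  then obtain f where f: "f \<in> set (Ex s [g])" and e: "e \<in> set (expand f)" by blast
  show ?case
  proof (cases "atomic f")
    case True thus ?thesis using e by (simp add: expand_def)
  next
    case False
    hence "e \<in> set (args f)" using e by (simp add: expand_def)
    hence "height e < height f" by (rule height_args)
    thus ?thesis using Suc.IH[OF f] False by auto
  qed
qed

lemma last_level_atomic: "e \<in> set (Ex s [g]) \<Longrightarrow> height g \<le> Suc s \<Longrightarrow> atomic e"
  using height_Ex[of e s g] height_atomic[of e] height_pos[of e] by auto

lemma Ex_stable: "height g \<le> Suc s \<Longrightarrow> s \<le> s' \<Longrightarrow> Ex s' [g] = Ex s [g]"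
proof -
  assume h: "height g \<le> Suc s" and ss: "s \<le> s'"
  have "\<forall>e\<in>set (Ex s [g]). atomic e" using last_level_atomic h by blast
  hence "Ex (s'-s) (Ex s [g]) = Ex s [g]" by (rule Ex_atomic)
  thus ?thesis using ss by (simp add: Ex_add)
qed

lemma sumAt_take_le: "j < length L \<Longrightarrow> sumAt (take j L) + At (L!j) \<le> sumAt L"
proof -
  assume j: "j < length L"
  have "sumAt L = sumAt (take j L) + sumAt (drop j L)" by (metis append_take_drop_id map_append sum_list_append)
  moreover have "drop j L = L!j # drop (Suc j) L" using j by (simp add: Cons_nth_drop_Suc)
  ultimately show ?thesis by simp
qed

lemma subf_self: "a \<in> subf a" by (cases a) auto

lemma subf_size: "b \<in> subf a \<Longrightarrow> size b \<le> size a"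
  by (induction a) auto

lemma subf_Ex: "e \<in> set (Ex s [g]) \<Longrightarrow> e \<in> subf g"
proof (induction s arbitrary: e)
  case 0 thus ?case by (simp add: subf_self)
next
  case (Suc s)
  have "e \<in> (\<Union>f\<in>set (Ex s [g]). set (expand f))"
    using Suc.prems by (simp only: Ex_Suc set_expand_all)
  then obtain f where f: "f \<in> set (Ex s [g])" and e: "e \<in> set (expand f)" by blast
  have fs: "f \<in> subf g" by (rule Suc.IH[OF f])
  have "e \<in> subf f"
  proof (cases "atomic f")
    case True thus ?thesis using e by (simp add: expand_def subf_self)
  next
    case False
    hence "e \<in> set (args f)" using e by (simp add: expand_def)
    thus ?thesis by (cases f) (auto simp: subf_self)
  qed
  thus ?case using fs subf_trans by blast
qed



function stl :: "(bool \<Rightarrow> bool \<Rightarrow> complex) \<Rightarrow> form \<Rightarrow> nat \<Rightarrow> op \<Rightarrow> op" where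
  "stl U e t \<tau> = (if height e \<le> t then \<tau> else apply_op (At e) (level_gate U e t) (stl U e (Suc t) \<tau>))"
  by auto
termination by (relation "measure (\<lambda>(U,e,t,\<tau>). height e - t)") auto

declare stl.simps[simp del]

lemma stl_top: "height e \<le> t \<Longrightarrow> stl U e t \<tau> = \<tau>"
  by (simp add: stl.simps)

lemma stl_step: "t < height e \<Longrightarrow> stl U e t \<tau> = apply_op (At e) (level_gate U e t) (stl U e (Suc t) \<tau>)"
  by (subst stl.simps) simp

lemma supp_stl: "supp (At e) \<tau> \<Longrightarrow> supp (At e) (stl U e t \<tau>)"
proof (induction U e t \<tau> rule: stl.induct)
  case (1 U e t \<tau>)
  thus ?case by (cases "height e \<le> t") (simp_all add: stl_top stl_step)
qed

definition gF :: "(bool \<Rightarrow> bool \<Rightarrow> complex) \<Rightarrow> form \<Rightarrow> nat \<times> op" where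
  "gF U b = (At b, gate_of U b)"

lemma lg_tensor: "level_gate U g i = tensor (map (gF U) (level g i))"
  by (simp add: level_gate_def gF_def[abs_def])

lemma tensor_mapF_append: "tensor (map (gF U) (xs@ys)) = tens (sumAt xs) (tensor (map (gF U) xs)) (tensor (map (gF U) ys))"
  by (simp add: tensor_append gF_def o_def)

lemma tensor_cons_tens: "tensor ((k,A)#rest) = tens k A (tensor rest)"
  by (simp add: tens_def fun_eq_iff)

lemma tensor_nil_id: "tensor [] = id_op 0"
  by (auto simp: id_op_def fun_eq_iff)

lemma uni_tensorF: "unitary2 U \<Longrightarrow> uni (sumAt L) (tensor (map (gF U) L))"
proof (induction L)
  case Nil thus ?case by (simp add: tensor_nil_id uni_id del: tensor.simps(1))
next
  case (Cons b L)
  thus ?case by (simp add: gF_def tensor_cons_tens uni_tens uni_gate_of del: tensor.simps)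
qed

lemma tensor_atomic: "(\<forall>e\<in>set L. atomic e) \<Longrightarrow> tensor (map (gF U) L) = id_op (sumAt L)"
proof (induction L)
  case Nil thus ?case by (simp add: tensor_nil_id del: tensor.simps(1))
next
  case (Cons b L)
  hence "atomic b" by simp
  hence g: "gF U b = (1, id_op 1)" and a1: "At b = 1" by (cases b; simp add: gF_def)+
  show ?case using Cons by (simp add: g a1 tensor_cons_tens id_tens[symmetric] del: tensor.simps)
qed

lemma sumAt_level: "sumAt (level g i) = At g"
  by (simp add: level_Ex sumAt_Ex)

lemma meaning_lemma:
  assumes u: "unitary2 U"
    and gate: "\<And>t. 1 \<le> t \<Longrightarrow> t < height g \<Longrightarrow> \<Phi> t = apply_op (At g) (level_gate U g t) (\<Phi> (Suc t))"
    and i: "1 \<le> i" "i \<le> height g" and j: "j < length (level g i)"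
  shows "red (map At (level g i)) j (\<Phi> i) =
     stl U (level g i ! j) 1 (redb (sumAt (take j (level g i))) (At (level g i ! j)) (At g) (\<Phi> (height g)))"
proof -
  define L where "L = level g i"
  define e where "e = L ! j"
  define A where "A = take j L"
  define B where "B = drop (Suc j) L"
  define k where "k = sumAt A"
  define h where "h = height g"
  define \<tau> where "\<tau> = redb k (At e) (At g) (\<Phi> h)"
  have LABe: "L = A @ [e] @ B" unfolding A_def B_def e_def using j L_def by (simp add: Cons_nth_drop_Suc)
  have eL: "e \<in> set (Ex (i-1) [g])" using j unfolding e_def L_def by (simp add: level_Ex)
  have Atg: "At g = k + At e + sumAt B"
    using sumAt_level[of g i] unfolding L_def[symmetric] LABe k_def by simp
  have he: "height e \<le> h - i + 1"
    using height_Ex[OF eL] height_atomic[of e] i unfolding h_def by auto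
  have claim: "\<forall>u. i + u + d = h \<longrightarrow> redb k (At e) (At g) (\<Phi> (i+u)) = stl U e (Suc u) \<tau>" for d
  proof (induction d)
    case 0
    show ?case
    proof (intro allI impI)
      fix u assume "i + u + 0 = h"
      hence "height e \<le> Suc u" "i + u = h" using he i by auto
      thus "redb k (At e) (At g) (\<Phi> (i+u)) = stl U e (Suc u) \<tau>" by (simp add: stl_top \<tau>_def)
    qed
  next
    case (Suc d)
    show ?case
    proof (intro allI impI)
      fix u assume iu: "i + u + Suc d = h"
      hence lt: "i + u < height g" unfolding h_def by simp
      have IH: "redb k (At e) (At g) (\<Phi> (i + Suc u)) = stl U e (Suc (Suc u)) \<tau>"
        using Suc.IH iu by (metis add_Suc_shift add_Suc_right)
      have lev: "level g (i+u) = Ex u A @ Ex u [e] @ Ex u B"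
      proof -
        have "level g (i+u) = Ex u L" using i unfolding L_def level_Ex Ex_add
          by (metis Nat.add_diff_assoc2 add.commute)
        thus ?thesis unfolding LABe Ex_append .
      qed
      have sA: "sumAt (Ex u A) = k" unfolding k_def sumAt_Ex ..
      have sE: "sumAt (Ex u [e]) = At e" by (simp add: sumAt_Ex)
      have sB: "sumAt (Ex u B) = sumAt B" by (simp add: sumAt_Ex)
      have lgE: "tensor (map (gF U) (Ex u [e])) = level_gate U e (Suc u)"
        by (simp add: lg_tensor level_Ex)
      have "\<Phi> (i+u) = apply_op (At g) (level_gate U g (i+u)) (\<Phi> (Suc (i+u)))"
        using gate[of "i+u"] lt i by simp
      also have "level_gate U g (i+u) = tens k (tensor (map (gF U) (Ex u A)))
          (tens (At e) (level_gate U e (Suc u)) (tensor (map (gF U) (Ex u B))))"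
        unfolding lg_tensor lev tensor_mapF_append sA sE lgE ..
      finally have Phi: "\<Phi> (i+u) = apply_op (At g) (tens k (tensor (map (gF U) (Ex u A)))
          (tens (At e) (level_gate U e (Suc u)) (tensor (map (gF U) (Ex u B))))) (\<Phi> (Suc (i+u)))" .
      have uA: "uni k (tensor (map (gF U) (Ex u A)))" using uni_tensorF[OF u, of "Ex u A"] sA by simp
      have uB: "uni (sumAt B) (tensor (map (gF U) (Ex u B)))" using uni_tensorF[OF u, of "Ex u B"] sB by simp
      have "redb k (At e) (At g) (\<Phi> (i+u)) = apply_op (At e) (level_gate U e (Suc u)) (redb k (At e) (At g) (\<Phi> (Suc (i+u))))"
        unfolding Phi by (rule T2[OF Atg uA uB])
      also have "\<dots> = apply_op (At e) (level_gate U e (Suc u)) (stl U e (Suc (Suc u)) \<tau>)"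
        using IH by simp
      also have "\<dots> = stl U e (Suc u) \<tau>"
      proof (cases "Suc u < height e")
        case True thus ?thesis by (simp add: stl_step)
      next
        case False
        have at: "\<forall>x\<in>set (Ex u [e]). atomic x" using last_level_atomic[of _ u e] False by auto
        have "level_gate U e (Suc u) = id_op (At e)"
          using tensor_atomic[OF at, of U] lgE sE by simp
        moreover have "supp (At e) (stl U e (Suc (Suc u)) \<tau>)"
          by (rule supp_stl) (simp add: \<tau>_def supp_def redb_def)
        ultimately show ?thesis using False by (simp add: apply_id stl_top)
      qed
      finally show "redb k (At e) (At g) (\<Phi> (i+u)) = stl U e (Suc u) \<tau>" .
    qed
  qed
  have "redb k (At e) (At g) (\<Phi> i) = stl U e 1 \<tau>"
    using claim[of "h - i"] i unfolding h_def by simp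
  moreover have "red (map At L) j (\<Phi> i) = redb k (At e) (At g) (\<Phi> i)"
    using j sumAt_level[of g i] unfolding L_def[symmetric]
    by (simp add: red_redb k_def A_def e_def take_map)
  ultimately show ?thesis unfolding L_def e_def \<tau>_def k_def A_def h_def by simp
qed



definition sem :: "(bool \<Rightarrow> bool \<Rightarrow> complex) \<Rightarrow> form \<Rightarrow> op \<Rightarrow> op" where
  "sem U e \<tau> = stl U e 1 \<tau>"

definition GoodL :: "(bool \<Rightarrow> bool \<Rightarrow> complex) \<Rightarrow> (form \<Rightarrow> op) \<Rightarrow> form list \<Rightarrow> op \<Rightarrow> bool" where
  "GoodL U M fs \<omega> \<longleftrightarrow> (\<forall>s j. j < length (Ex s fs) \<longrightarrow>
     sem U (Ex s fs ! j) (redb (sumAt (take j (Ex s fs))) (At (Ex s fs ! j)) (sumAt fs) \<omega>) = M (Ex s fs ! j))"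

lemma G_app:
  assumes g1: "GoodL U M fs \<omega>1" and g2: "GoodL U M gs \<omega>2"
    and t1: "trace (sumAt fs) \<omega>1 = 1" and t2: "trace (sumAt gs) \<omega>2 = 1"
  shows "GoodL U M (fs@gs) (tens (sumAt fs) \<omega>1 \<omega>2)"
  unfolding GoodL_def
proof (intro allI impI)
  fix s j
  let ?X = "Ex s fs" and ?Y = "Ex s gs"
  assume j: "j < length (Ex s (fs@gs))"
  have XY: "Ex s (fs@gs) = ?X @ ?Y" by (rule Ex_append)
  have sX: "sumAt ?X = sumAt fs" "sumAt ?Y = sumAt gs" by (simp_all add: sumAt_Ex)
  show "sem U (Ex s (fs@gs) ! j) (redb (sumAt (take j (Ex s (fs@gs)))) (At (Ex s (fs@gs) ! j)) (sumAt (fs@gs)) (tens (sumAt fs) \<omega>1 \<omega>2)) = M (Ex s (fs@gs) ! j)"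
  proof (cases "j < length ?X")
    case True
    have le: "sumAt (take j ?X) + At (?X ! j) \<le> sumAt fs" using sumAt_take_le[OF True] sX by simp
    have "redb (sumAt (take j ?X)) (At (?X ! j)) (sumAt fs + sumAt gs) (tens (sumAt fs) \<omega>1 \<omega>2) =
          redb (sumAt (take j ?X)) (At (?X ! j)) (sumAt fs) \<omega>1"
      using redb_tens1[OF le, where b="sumAt gs" and A=\<omega>1 and B=\<omega>2] t2 by simp
    thus ?thesis using g1 True unfolding GoodL_def XY by (simp add: nth_append)
  next
    case False
    define j' where "j' = j - length ?X"
    have j': "j' < length ?Y" using j False unfolding XY j'_def by simp
    have jj: "j = length ?X + j'" using False unfolding j'_def by simp
    have le: "sumAt (take j' ?Y) + At (?Y ! j') \<le> sumAt gs" using sumAt_take_le[OF j'] sX by simp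
    have tk: "take j (?X @ ?Y) = ?X @ take j' ?Y" "(?X @ ?Y) ! j = ?Y ! j'" unfolding jj by simp_all
    have "redb (sumAt fs + sumAt (take j' ?Y)) (At (?Y ! j')) (sumAt fs + sumAt gs) (tens (sumAt fs) \<omega>1 \<omega>2) =
          redb (sumAt (take j' ?Y)) (At (?Y ! j')) (sumAt gs) \<omega>2"
      using redb_tens2[of "sumAt fs" "sumAt fs + sumAt (take j' ?Y)" "At (?Y ! j')" "sumAt gs" \<omega>1 \<omega>2] le t1 by simp
    thus ?thesis using g2 j' unfolding GoodL_def XY tk using sX by simp
  qed
qed

lemma G_cons:
  assumes na: "\<not> atomic \<phi>" and sp: "supp (At \<phi>) \<omega>" and m: "M \<phi> = sem U \<phi> \<omega>"
    and g: "GoodL U M (args \<phi>) \<omega>"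
  shows "GoodL U M [\<phi>] \<omega>"
  unfolding GoodL_def
proof (intro allI impI)
  fix s j assume j: "j < length (Ex s [\<phi>])"
  show "sem U (Ex s [\<phi>] ! j) (redb (sumAt (take j (Ex s [\<phi>]))) (At (Ex s [\<phi>] ! j)) (sumAt [\<phi>]) \<omega>) = M (Ex s [\<phi>] ! j)"
  proof (cases s)
    case 0 thus ?thesis using j m sp by (simp add: redb_full)
  next
    case (Suc s')
    have e: "Ex s [\<phi>] = Ex s' (args \<phi>)" unfolding Suc Ex_Suc_right expand_all_single[OF na] ..
    show ?thesis using g j unfolding GoodL_def e by (simp add: sumAt_args[OF na])
  qed
qed

lemma G_atom:
  assumes a: "atomic \<phi>" and sp: "supp (At \<phi>) \<omega>" and m: "M \<phi> = \<omega>"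
  shows "GoodL U M [\<phi>] \<omega>"
  unfolding GoodL_def
proof (intro allI impI)
  fix s j assume j: "j < length (Ex s [\<phi>])"
  have e: "Ex s [\<phi>] = [\<phi>]" using a by (simp add: Ex_atomic)
  have h: "height \<phi> = 1" using a height_atomic by blast
  show "sem U (Ex s [\<phi>] ! j) (redb (sumAt (take j (Ex s [\<phi>]))) (At (Ex s [\<phi>] ! j)) (sumAt [\<phi>]) \<omega>) = M (Ex s [\<phi>] ! j)"
    using j sp m h unfolding e by (simp add: redb_full sem_def stl_top)
qed

lemma G_split:
  assumes g: "GoodL U M (A@[\<phi>]@B) \<omega>"
  shows "GoodL U M [\<phi>] (redb (sumAt A) (At \<phi>) (sumAt (A@[\<phi>]@B)) \<omega>)"
  unfolding GoodL_def
proof (intro allI impI)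
  fix s j
  let ?A = "Ex s A" and ?P = "Ex s [\<phi>]" and ?B = "Ex s B"
  assume j: "j < length ?P"
  have E: "Ex s (A@[\<phi>]@B) = ?A @ ?P @ ?B" by (simp only: Ex_append)
  have sP: "sumAt ?P = At \<phi>" "sumAt ?A = sumAt A" by (simp_all add: sumAt_Ex)
  have le: "sumAt (take j ?P) + At (?P ! j) \<le> At \<phi>" using sumAt_take_le[OF j] sP by simp
  have le2: "sumAt A + At \<phi> \<le> sumAt (A@[\<phi>]@B)" by simp
  have j2: "length ?A + j < length (Ex s (A@[\<phi>]@B))" using j E by simp
  have tk: "take (length ?A + j) (Ex s (A@[\<phi>]@B)) = ?A @ take j ?P" "Ex s (A@[\<phi>]@B) ! (length ?A + j) = ?P ! j"
    unfolding E using j by (simp_all add: nth_append)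
  have "redb (sumAt (take j ?P)) (At (?P ! j)) (At \<phi>) (redb (sumAt A) (At \<phi>) (sumAt (A@[\<phi>]@B)) \<omega>) =
        redb (sumAt A + sumAt (take j ?P)) (At (?P ! j)) (sumAt (A@[\<phi>]@B)) \<omega>"
    by (rule redb_comp[OF le le2])
  moreover have "sem U (?P ! j) (redb (sumAt A + sumAt (take j ?P)) (At (?P ! j)) (sumAt (A@[\<phi>]@B)) \<omega>) = M (?P ! j)"
    using g j2 unfolding GoodL_def tk[symmetric] using tk sP by (metis sum_list_append map_append)
  ultimately show "sem U (?P ! j) (redb (sumAt (take j ?P)) (At (?P ! j)) (sumAt [\<phi>]) (redb (sumAt A) (At \<phi>) (sumAt (A@[\<phi>]@B)) \<omega>)) = M (?P ! j)"
    by simp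
qed

lemma G_shift: "GoodL U M [g] \<omega> \<Longrightarrow> GoodL U M (Ex t [g]) \<omega>"
  unfolding GoodL_def by (simp add: Ex_add sumAt_Ex)

lemma G_cong: "GoodL U M1 fs \<omega> \<Longrightarrow> (\<And>s e. e \<in> set (Ex s fs) \<Longrightarrow> M1 e = M2 e) \<Longrightarrow> GoodL U M2 fs \<omega>"
  unfolding GoodL_def by (metis nth_mem)



lemma occ_exists: "\<phi> \<in> subf g \<Longrightarrow> \<exists>t A B. Ex t [g] = A @ [\<phi>] @ B \<and> t < height g"
proof (induction g)
  case (Atom k) thus ?case by (intro exI[of _ 0] exI[of _ "[]"]) auto
next
  case Tt thus ?case by (intro exI[of _ 0] exI[of _ "[]"]) auto
next
  case Ff thus ?case by (intro exI[of _ 0] exI[of _ "[]"]) auto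
next
  case (Neg a)
  show ?case
  proof (cases "\<phi> = Neg a")
    case True thus ?thesis by (intro exI[of _ 0] exI[of _ "[]"]) auto
  next
    case False
    then obtain t A B where "Ex t [a] = A @ [\<phi>] @ B" "t < height a" using Neg by auto
    thus ?thesis by (intro exI[of _ "Suc t"] exI[of _ A] exI[of _ B]) (simp add: Ex_Suc_right expand_all_single del: funpow.simps)
  qed
next
  case (SqId a)
  show ?case
  proof (cases "\<phi> = SqId a")
    case True thus ?thesis by (intro exI[of _ 0] exI[of _ "[]"]) auto
  next
    case False
    then obtain t A B where "Ex t [a] = A @ [\<phi>] @ B" "t < height a" using SqId by auto
    thus ?thesis by (intro exI[of _ "Suc t"] exI[of _ A] exI[of _ B]) (simp add: Ex_Suc_right expand_all_single del: funpow.simps)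
  qed
next
  case (SqNeg a)
  show ?case
  proof (cases "\<phi> = SqNeg a")
    case True thus ?thesis by (intro exI[of _ 0] exI[of _ "[]"]) auto
  next
    case False
    then obtain t A B where "Ex t [a] = A @ [\<phi>] @ B" "t < height a" using SqNeg by auto
    thus ?thesis by (intro exI[of _ "Suc t"] exI[of _ A] exI[of _ B]) (simp add: Ex_Suc_right expand_all_single del: funpow.simps)
  qed
next
  case (Xor a b)
  have ex: "Ex (Suc t) [Xor a b] = Ex t [a] @ Ex t [b]" for t
    by (simp add: Ex_Suc_right expand_all_single Ex_append[symmetric] del: funpow.simps)
  show ?case
  proof (cases "\<phi> = Xor a b")
    case True thus ?thesis by (intro exI[of _ 0] exI[of _ "[]"]) auto
  next
    case False
    hence "\<phi> \<in> subf a \<or> \<phi> \<in> subf b" using Xor.prems by auto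
    thus ?thesis
    proof
      assume "\<phi> \<in> subf a"
      then obtain t A B where "Ex t [a] = A @ [\<phi>] @ B" "t < height a" using Xor.IH by blast
      thus ?thesis by (intro exI[of _ "Suc t"] exI[of _ A] exI[of _ "B @ Ex t [b]"]) (simp add: ex del: funpow.simps)
    next
      assume "\<phi> \<in> subf b"
      then obtain t A B where "Ex t [b] = A @ [\<phi>] @ B" "t < height b" using Xor.IH by blast
      thus ?thesis by (intro exI[of _ "Suc t"] exI[of _ "Ex t [a] @ A"] exI[of _ B]) (simp add: ex del: funpow.simps)
    qed
  qed
next
  case (Toff a b c)
  have ex: "Ex (Suc t) [Toff a b c] = Ex t [a] @ Ex t [b] @ Ex t [c]" for t
    by (simp add: Ex_Suc_right expand_all_single Ex_append[symmetric] del: funpow.simps)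
  show ?case
  proof (cases "\<phi> = Toff a b c")
    case True thus ?thesis by (intro exI[of _ 0] exI[of _ "[]"]) auto
  next
    case False
    hence "\<phi> \<in> subf a \<or> \<phi> \<in> subf b \<or> \<phi> \<in> subf c" using Toff.prems by auto
    thus ?thesis
    proof (elim disjE)
      assume "\<phi> \<in> subf a"
      then obtain t A B where "Ex t [a] = A @ [\<phi>] @ B" "t < height a" using Toff.IH by blast
      thus ?thesis by (intro exI[of _ "Suc t"] exI[of _ A] exI[of _ "B @ Ex t [b] @ Ex t [c]"]) (simp add: ex del: funpow.simps)
    next
      assume "\<phi> \<in> subf b"
      then obtain t A B where "Ex t [b] = A @ [\<phi>] @ B" "t < height b" using Toff.IH by blast
      thus ?thesis by (intro exI[of _ "Suc t"] exI[of _ "Ex t [a] @ A"] exI[of _ "B @ Ex t [c]"]) (simp add: ex del: funpow.simps)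
    next
      assume "\<phi> \<in> subf c"
      then obtain t A B where "Ex t [c] = A @ [\<phi>] @ B" "t < height c" using Toff.IH by blast
      thus ?thesis by (intro exI[of _ "Suc t"] exI[of _ "Ex t [a] @ Ex t [b] @ A"] exI[of _ B]) (simp add: ex del: funpow.simps)
    qed
  qed
qed

lemma occ_of: "Ex t [g] = A @ [\<phi>] @ B \<Longrightarrow> t < height g \<Longrightarrow> occ g (Suc t) (length A) \<and> level g (Suc t) ! length A = \<phi>"
  by (simp add: occ_def level_Ex)

lemma holm_unique:
  assumes all: "\<And>i j. occ g i j \<Longrightarrow> ctx H g i j = M (level g i ! j)" and s: "\<phi> \<in> subf g"
  shows "holm H g \<phi> = M \<phi>"
proof -
  obtain t A B where "Ex t [g] = A @ [\<phi>] @ B" "t < height g" using occ_exists[OF s] by blast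
  hence o: "occ g (Suc t) (length A)" "level g (Suc t) ! length A = \<phi>" using occ_of by blast+
  have ex: "\<exists>\<rho>. \<exists>i j. occ g i j \<and> level g i ! j = \<phi> \<and> \<rho> = ctx H g i j" using o by blast
  have "\<exists>i j. occ g i j \<and> level g i ! j = \<phi> \<and> holm H g \<phi> = ctx H g i j"
    unfolding holm_def by (rule someI_ex[OF ex])
  thus ?thesis using all by metis
qed

lemma holm_ctx:
  assumes h: "holistic U H" and o: "occ g i j"
  shows "holm H g (level g i ! j) = ctx H g i j"
proof -
  have norm: "\<And>i' j'. occ g i' j' \<Longrightarrow> level g i ! j = level g i' ! j' \<Longrightarrow> ctx H g i j = ctx H g i' j'"
    using h o unfolding holistic_def by blast
  have ex: "\<exists>\<rho>. \<exists>i' j'. occ g i' j' \<and> level g i' ! j' = level g i ! j \<and> \<rho> = ctx H g i' j'" using o by blast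
  have "\<exists>i' j'. occ g i' j' \<and> level g i' ! j' = level g i ! j \<and> holm H g (level g i ! j) = ctx H g i' j'"
    unfolding holm_def by (rule someI_ex[OF ex])
  thus ?thesis using norm by metis
qed

lemma G_src:
  assumes h: "holistic U H" and u: "unitary2 U"
  shows "GoodL U (holm H \<gamma>) [\<gamma>] (H \<gamma> (height \<gamma>))"
  unfolding GoodL_def
proof (intro allI impI)
  fix s j assume j: "j < length (Ex s [\<gamma>])"
  define i where "i = min (Suc s) (height \<gamma>)"
  have i: "1 \<le> i" "i \<le> height \<gamma>" unfolding i_def using height_pos[of \<gamma>] by auto
  have lev: "level \<gamma> i = Ex s [\<gamma>]"
  proof (cases "Suc s \<le> height \<gamma>")
    case True thus ?thesis unfolding i_def by (simp add: level_Ex)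
  next
    case False
    hence "Ex s [\<gamma>] = Ex (height \<gamma> - 1) [\<gamma>]" by (intro Ex_stable) auto
    thus ?thesis unfolding i_def using False by (simp add: level_Ex)
  qed
  have o: "occ \<gamma> i j" using i j lev by (simp add: occ_def)
  have gate: "\<And>t. 1 \<le> t \<Longrightarrow> t < height \<gamma> \<Longrightarrow> H \<gamma> t = apply_op (At \<gamma>) (level_gate U \<gamma> t) (H \<gamma> (Suc t))"
    using h unfolding holistic_def by blast
  have "ctx H \<gamma> i j = sem U (level \<gamma> i ! j) (redb (sumAt (take j (level \<gamma> i))) (At (level \<gamma> i ! j)) (At \<gamma>) (H \<gamma> (height \<gamma>)))"
    unfolding ctx_def sem_def using meaning_lemma[OF u gate i, of j] j lev by simp
  moreover have "holm H \<gamma> (level \<gamma> i ! j) = ctx H \<gamma> i j" by (rule holm_ctx[OF h o])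
  ultimately show "sem U (Ex s [\<gamma>] ! j) (redb (sumAt (take j (Ex s [\<gamma>]))) (At (Ex s [\<gamma>] ! j)) (sumAt [\<gamma>]) (H \<gamma> (height \<gamma>))) = holm H \<gamma> (Ex s [\<gamma>] ! j)"
    using lev by simp
qed

lemma density_stl: "unitary2 U \<Longrightarrow> density (At e) \<tau> \<Longrightarrow> density (At e) (stl U e t \<tau>)"
proof (induction U e t \<tau> rule: stl.induct)
  case (1 U e t \<tau>)
  show ?case
  proof (cases "height e \<le> t")
    case True thus ?thesis using 1 by (simp add: stl_top)
  next
    case False
    have "uni (At e) (level_gate U e t)"
      using uni_tensorF[OF \<open>unitary2 U\<close>, of "level e t"] by (simp add: lg_tensor sumAt_level)
    thus ?thesis using 1 False by (simp add: stl_step density_apply)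
  qed
qed

lemma density_proj:
  assumes u: "unitary2 U"
  shows "density 1 (P1 U 1)" "density 1 (P0 U 1)"
proof -
  have d: "density 1 (\<lambda>x y. if length x = 1 \<and> x = y \<and> (last x = b) then 1 else 0)" for b
  proof -
    let ?D = "\<lambda>x y. if length x = 1 \<and> x = y \<and> (last x = b) then 1 else (0::complex)"
    have s: "supp 1 ?D" by (auto simp: supp_def)
    have h: "herm ?D" by (auto simp: herm_def)
    have p: "psd 1 ?D" unfolding psd_def
    proof
      fix v :: "bool list \<Rightarrow> complex"
      have "(\<Sum>x\<in>blists 1. \<Sum>y\<in>blists 1. cnj (v x) * ?D x y * v y) = cnj (v [b]) * v [b]"
        by (cases b) (simp_all add: blists_Suc0)
      thus "0 \<le> Re (\<Sum>x\<in>blists 1. \<Sum>y\<in>blists 1. cnj (v x) * ?D x y * v y)"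
        by (simp add: mult.commute)
    qed
    have t: "trace 1 ?D = 1" by (cases b) (simp_all add: trace_def blists_Suc0)
    show ?thesis using s h p t by (simp add: density_iff)
  qed
  have "P1 U 1 = apply_op 1 (Tn U 1) (\<lambda>x y. if length x = 1 \<and> x = y \<and> (last x = True) then 1 else 0)"
    by (simp add: P1_def conjT_apply)
  thus "density 1 (P1 U 1)" using density_apply[OF d[of True] uni_Tn[OF u]] by simp
  have "P0 U 1 = apply_op 1 (Tn U 1) (\<lambda>x y. if length x = 1 \<and> x = y \<and> (last x = False) then 1 else 0)"
    by (simp add: P0_def conjT_apply)
  thus "density 1 (P0 U 1)" using density_apply[OF d[of False] uni_Tn[OF u]] by simp
qed



definition shsel :: "form \<Rightarrow> form \<Rightarrow> nat \<times> form list \<times> form list" where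
  "shsel \<gamma> \<phi> = (SOME p. Ex (fst p) [\<gamma>] = fst (snd p) @ [\<phi>] @ snd (snd p) \<and> fst p < height \<gamma>)"

definition sh :: "hol \<Rightarrow> form \<Rightarrow> form \<Rightarrow> op" where
  "sh H \<gamma> \<phi> = redb (sumAt (fst (snd (shsel \<gamma> \<phi>)))) (At \<phi>) (At \<gamma>) (H \<gamma> (height \<gamma>))"

fun blk :: "(bool \<Rightarrow> bool \<Rightarrow> complex) \<Rightarrow> hol \<Rightarrow> form \<Rightarrow> form \<Rightarrow> op" where
  "blk U H \<gamma> (Atom k) = (if Atom k \<in> subf \<gamma> then sh H \<gamma> (Atom k) else P1 U 1)"
| "blk U H \<gamma> Tt = (if Tt \<in> subf \<gamma> then sh H \<gamma> Tt else P1 U 1)"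
| "blk U H \<gamma> Ff = (if Ff \<in> subf \<gamma> then sh H \<gamma> Ff else P0 U 1)"
| "blk U H \<gamma> (Neg a) = (if Neg a \<in> subf \<gamma> then sh H \<gamma> (Neg a) else blk U H \<gamma> a)"
| "blk U H \<gamma> (SqId a) = (if SqId a \<in> subf \<gamma> then sh H \<gamma> (SqId a) else blk U H \<gamma> a)"
| "blk U H \<gamma> (SqNeg a) = (if SqNeg a \<in> subf \<gamma> then sh H \<gamma> (SqNeg a) else blk U H \<gamma> a)"
| "blk U H \<gamma> (Xor a b) = (if Xor a b \<in> subf \<gamma> then sh H \<gamma> (Xor a b)
     else tens (At a) (blk U H \<gamma> a) (blk U H \<gamma> b))"
| "blk U H \<gamma> (Toff a b c) = (if Toff a b c \<in> subf \<gamma> then sh H \<gamma> (Toff a b c)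
     else tens (At a) (blk U H \<gamma> a) (tens (At b) (blk U H \<gamma> b) (blk U H \<gamma> c)))"

definition Mf :: "(bool \<Rightarrow> bool \<Rightarrow> complex) \<Rightarrow> hol \<Rightarrow> form \<Rightarrow> form \<Rightarrow> op" where
  "Mf U H \<gamma> \<phi> = (if \<phi> \<in> subf \<gamma> then holm H \<gamma> \<phi> else sem U \<phi> (blk U H \<gamma> \<phi>))"

lemma blk_shared: "\<phi> \<in> subf \<gamma> \<Longrightarrow> blk U H \<gamma> \<phi> = sh H \<gamma> \<phi>"
  by (cases \<phi>) auto

lemma shared_good:
  assumes h: "holistic U H" and u: "unitary2 U" and s: "\<phi> \<in> subf \<gamma>"
  shows "GoodL U (Mf U H \<gamma>) [\<phi>] (sh H \<gamma> \<phi>) \<and> density (At \<phi>) (sh H \<gamma> \<phi>)"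
proof -
  have ex: "\<exists>p. Ex (fst p) [\<gamma>] = fst (snd p) @ [\<phi>] @ snd (snd p) \<and> fst p < height \<gamma>"
    using occ_exists[OF s] by auto
  define p where "p = shsel \<gamma> \<phi>"
  have p: "Ex (fst p) [\<gamma>] = fst (snd p) @ [\<phi>] @ snd (snd p)" "fst p < height \<gamma>"
    using someI_ex[OF ex] unfolding p_def shsel_def by auto
  define A where "A = fst (snd p)"
  define B where "B = snd (snd p)"
  have E: "Ex (fst p) [\<gamma>] = A @ [\<phi>] @ B" using p A_def B_def by simp
  have sA: "sumAt (A @ [\<phi>] @ B) = At \<gamma>" using sumAt_Ex[where s="fst p" and xs="[\<gamma>]"] E by simp
  have g0: "GoodL U (holm H \<gamma>) (A @ [\<phi>] @ B) (H \<gamma> (height \<gamma>))"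
    using G_shift[OF G_src[OF h u, of \<gamma>], where t="fst p"] E by simp
  have g1: "GoodL U (holm H \<gamma>) [\<phi>] (sh H \<gamma> \<phi>)"
    using G_split[OF g0] sA unfolding sh_def p_def[symmetric] A_def by simp
  have g2: "GoodL U (Mf U H \<gamma>) [\<phi>] (sh H \<gamma> \<phi>)"
  proof (rule G_cong[OF g1])
    fix s e assume "e \<in> set (Ex s [\<phi>])"
    hence "e \<in> subf \<phi>" by (rule subf_Ex)
    hence "e \<in> subf \<gamma>" using s subf_trans by blast
    thus "holm H \<gamma> e = Mf U H \<gamma> e" by (simp add: Mf_def)
  qed
  have dH: "density (At \<gamma>) (H \<gamma> (height \<gamma>))"
    using h height_pos[of \<gamma>] unfolding holistic_def by blast
  have "density (At \<phi>) (redb (sumAt A) (At \<phi>) (At \<gamma>) (H \<gamma> (height \<gamma>)))"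
    by (rule density_redb[OF dH, where r="sumAt B"]) (use sA in simp)
  thus ?thesis using g2 unfolding sh_def p_def[symmetric] A_def by simp
qed

lemma trace_dens: "density n \<rho> \<Longrightarrow> trace n \<rho> = 1" by (simp add: density_iff)
lemma supp_dens: "density n \<rho> \<Longrightarrow> supp n \<rho>" by (simp add: density_iff)

lemma main_good:
  assumes h: "holistic U H" and u: "unitary2 U"
  shows "GoodL U (Mf U H \<gamma>) [\<phi>] (blk U H \<gamma> \<phi>) \<and> density (At \<phi>) (blk U H \<gamma> \<phi>)"
proof (cases "\<phi> \<in> subf \<gamma>")
  case True thus ?thesis using shared_good[OF h u True] by (simp add: blk_shared)
next
  case False
  thus ?thesis
  proof (induction \<phi>)
    case (Atom k)
    have "GoodL U (Mf U H \<gamma>) [Atom k] (P1 U 1)"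
      by (rule G_atom) (use Atom density_proj[OF u] in \<open>simp_all add: Mf_def sem_def stl_top supp_dens\<close>)
    thus ?case using Atom density_proj[OF u] by simp
  next
    case Tt
    have "GoodL U (Mf U H \<gamma>) [Tt] (P1 U 1)"
      by (rule G_atom) (use Tt density_proj[OF u] in \<open>simp_all add: Mf_def sem_def stl_top supp_dens\<close>)
    thus ?case using Tt density_proj[OF u] by simp
  next
    case Ff
    have "GoodL U (Mf U H \<gamma>) [Ff] (P0 U 1)"
      by (rule G_atom) (use Ff density_proj[OF u] in \<open>simp_all add: Mf_def sem_def stl_top supp_dens\<close>)
    thus ?case using Ff density_proj[OF u] by simp
  next
    case (Neg a)
    have IH: "GoodL U (Mf U H \<gamma>) [a] (blk U H \<gamma> a) \<and> density (At a) (blk U H \<gamma> a)"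
      using Neg.IH shared_good[OF h u, of a] blk_shared[of a] by (cases "a \<in> subf \<gamma>") auto
    have "GoodL U (Mf U H \<gamma>) [Neg a] (blk U H \<gamma> a)"
      by (rule G_cons) (use IH Neg.prems in \<open>simp_all add: Mf_def supp_dens\<close>)
    thus ?case using IH Neg.prems by simp
  next
    case (SqId a)
    have IH: "GoodL U (Mf U H \<gamma>) [a] (blk U H \<gamma> a) \<and> density (At a) (blk U H \<gamma> a)"
      using SqId.IH shared_good[OF h u, of a] blk_shared[of a] by (cases "a \<in> subf \<gamma>") auto
    have "GoodL U (Mf U H \<gamma>) [SqId a] (blk U H \<gamma> a)"
      by (rule G_cons) (use IH SqId.prems in \<open>simp_all add: Mf_def supp_dens\<close>)
    thus ?case using IH SqId.prems by simp
  next
    case (SqNeg a)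
    have IH: "GoodL U (Mf U H \<gamma>) [a] (blk U H \<gamma> a) \<and> density (At a) (blk U H \<gamma> a)"
      using SqNeg.IH shared_good[OF h u, of a] blk_shared[of a] by (cases "a \<in> subf \<gamma>") auto
    have "GoodL U (Mf U H \<gamma>) [SqNeg a] (blk U H \<gamma> a)"
      by (rule G_cons) (use IH SqNeg.prems in \<open>simp_all add: Mf_def supp_dens\<close>)
    thus ?case using IH SqNeg.prems by simp
  next
    case (Xor a b)
    have IHa: "GoodL U (Mf U H \<gamma>) [a] (blk U H \<gamma> a) \<and> density (At a) (blk U H \<gamma> a)"
      using Xor.IH(1) shared_good[OF h u, of a] blk_shared[of a] by (cases "a \<in> subf \<gamma>") auto
    have IHb: "GoodL U (Mf U H \<gamma>) [b] (blk U H \<gamma> b) \<and> density (At b) (blk U H \<gamma> b)"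
      using Xor.IH(2) shared_good[OF h u, of b] blk_shared[of b] by (cases "b \<in> subf \<gamma>") auto
    let ?w = "tens (At a) (blk U H \<gamma> a) (blk U H \<gamma> b)"
    have gab: "GoodL U (Mf U H \<gamma>) ([a]@[b]) ?w"
      using G_app[of U "Mf U H \<gamma>" "[a]" "blk U H \<gamma> a" "[b]" "blk U H \<gamma> b"] IHa IHb trace_dens by simp
    have d: "density (At (Xor a b)) ?w" using density_tens IHa IHb by simp
    have "GoodL U (Mf U H \<gamma>) [Xor a b] ?w"
      by (rule G_cons) (use gab d Xor.prems in \<open>simp_all add: Mf_def supp_dens\<close>)
    thus ?case using d Xor.prems by simp
  next
    case (Toff a b c)
    have IHa: "GoodL U (Mf U H \<gamma>) [a] (blk U H \<gamma> a) \<and> density (At a) (blk U H \<gamma> a)"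
      using Toff.IH(1) shared_good[OF h u, of a] blk_shared[of a] by (cases "a \<in> subf \<gamma>") auto
    have IHb: "GoodL U (Mf U H \<gamma>) [b] (blk U H \<gamma> b) \<and> density (At b) (blk U H \<gamma> b)"
      using Toff.IH(2) shared_good[OF h u, of b] blk_shared[of b] by (cases "b \<in> subf \<gamma>") auto
    have IHc: "GoodL U (Mf U H \<gamma>) [c] (blk U H \<gamma> c) \<and> density (At c) (blk U H \<gamma> c)"
      using Toff.IH(3) shared_good[OF h u, of c] blk_shared[of c] by (cases "c \<in> subf \<gamma>") auto
    let ?w2 = "tens (At b) (blk U H \<gamma> b) (blk U H \<gamma> c)"
    let ?w = "tens (At a) (blk U H \<gamma> a) ?w2"
    have gbc: "GoodL U (Mf U H \<gamma>) ([b]@[c]) ?w2"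
      using G_app[of U "Mf U H \<gamma>" "[b]" "blk U H \<gamma> b" "[c]" "blk U H \<gamma> c"] IHb IHc trace_dens by simp
    have d2: "density (At b + At c) ?w2" using density_tens IHb IHc by simp
    have gabc: "GoodL U (Mf U H \<gamma>) ([a]@([b]@[c])) ?w"
      using G_app[of U "Mf U H \<gamma>" "[a]" "blk U H \<gamma> a" "[b]@[c]" ?w2] IHa gbc d2 trace_dens by simp
    have d: "density (At (Toff a b c)) ?w" using density_tens[of "At a" _ "At b + At c"] IHa d2 by (simp add: add.assoc)
    have "GoodL U (Mf U H \<gamma>) [Toff a b c] ?w"
      by (rule G_cons) (use gabc d Toff.prems in \<open>simp_all add: Mf_def supp_dens\<close>)
    thus ?case using d Toff.prems by simp
  qed
qed



lemma Mf_Ff: "holistic U H \<Longrightarrow> Mf U H \<gamma> Ff = P0 U 1"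
proof (cases "Ff \<in> subf \<gamma>")
  case True
  assume h: "holistic U H"
  obtain t A B where "Ex t [\<gamma>] = A @ [Ff] @ B" "t < height \<gamma>" using occ_exists[OF True] by blast
  hence o: "occ \<gamma> (Suc t) (length A)" "level \<gamma> (Suc t) ! length A = Ff" using occ_of by blast+
  have "holm H \<gamma> Ff = ctx H \<gamma> (Suc t) (length A)" using holm_ctx[OF h o(1)] o(2) by simp
  also have "\<dots> = P0 U 1" using h o unfolding holistic_def by blast
  finally show ?thesis using True by (simp add: Mf_def)
next
  case False thus ?thesis by (simp add: Mf_def sem_def stl_top)
qed

lemma Mf_Tt: "holistic U H \<Longrightarrow> Mf U H \<gamma> Tt = P1 U 1"
proof (cases "Tt \<in> subf \<gamma>")
  case True
  assume h: "holistic U H"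
  obtain t A B where "Ex t [\<gamma>] = A @ [Tt] @ B" "t < height \<gamma>" using occ_exists[OF True] by blast
  hence o: "occ \<gamma> (Suc t) (length A)" "level \<gamma> (Suc t) ! length A = Tt" using occ_of by blast+
  have "holm H \<gamma> Tt = ctx H \<gamma> (Suc t) (length A)" using holm_ctx[OF h o(1)] o(2) by simp
  also have "\<dots> = P1 U 1" using h o unfolding holistic_def by blast
  finally show ?thesis using True by (simp add: Mf_def)
next
  case False thus ?thesis by (simp add: Mf_def sem_def stl_top)
qed

lemma extend_model:
  fixes \<gamma> \<beta> :: form
  assumes u: "unitary2 U" and h: "holistic U H"
  defines "g' \<equiv> Xor \<gamma> \<beta>"
  defines "\<omega> \<equiv> blk U H \<gamma> g'"
  defines "H' \<equiv> H(g' := (\<lambda>t. stl U g' t \<omega>))"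
  shows "holistic U H' \<and> (\<forall>\<phi>\<in>subf g'. holm H' g' \<phi> = Mf U H \<gamma> \<phi>)"
proof -
  let ?M = "Mf U H \<gamma>"
  have mg: "GoodL U ?M [g'] \<omega> \<and> density (At g') \<omega>" unfolding \<omega>_def by (rule main_good[OF h u])
  have gate': "\<And>t. 1 \<le> t \<Longrightarrow> t < height g' \<Longrightarrow> stl U g' t \<omega> = apply_op (At g') (level_gate U g' t) (stl U g' (Suc t) \<omega>)"
    by (simp add: stl_step)
  have key: "ctx H' g' i j = ?M (level g' i ! j)" if o: "occ g' i j" for i j
  proof -
    have i: "1 \<le> i" "i \<le> height g'" and j: "j < length (level g' i)" using o by (auto simp: occ_def)
    have "ctx H' g' i j = red (map At (level g' i)) j (stl U g' i \<omega>)"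
      by (simp add: ctx_def H'_def)
    also have "\<dots> = sem U (level g' i ! j) (redb (sumAt (take j (level g' i))) (At (level g' i ! j)) (At g') \<omega>)"
      using meaning_lemma[OF u, of g' "\<lambda>t. stl U g' t \<omega>", OF gate' i j] by (simp add: stl_top sem_def)
    also have "\<dots> = ?M (level g' i ! j)"
    proof -
      have G: "GoodL U ?M [g'] \<omega>" using mg by blast
      have jj: "j < length (Ex (i-1) [g'])" using j by (simp add: level_Ex)
      note G[unfolded GoodL_def, rule_format, OF jj]
      thus ?thesis by (simp add: level_Ex)
    qed
    finally show ?thesis .
  qed
  have hol: "holistic U H'"
    unfolding holistic_def
  proof (intro conjI allI impI)
    fix a i assume "1 \<le> i \<and> i \<le> height a"
    show "density (At a) (H' a i)"
    proof (cases "a = g'")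
      case True
      have "density (At g') (stl U g' i \<omega>)" using density_stl[OF u] mg by blast
      thus ?thesis using True by (simp add: H'_def)
    next
      case False
      thus ?thesis using h \<open>1 \<le> i \<and> i \<le> height a\<close> unfolding holistic_def H'_def by simp
    qed
  next
    fix a i assume ai: "1 \<le> i \<and> i < height a"
    show "H' a i = apply_op (At a) (level_gate U a i) (H' a (Suc i))"
    proof (cases "a = g'")
      case True thus ?thesis using ai by (simp add: H'_def stl_step)
    next
      case False thus ?thesis using h ai unfolding holistic_def H'_def by simp
    qed
  next
    fix g i j i' j' assume a: "occ g i j \<and> occ g i' j' \<and> level g i ! j = level g i' ! j'"
    show "ctx H' g i j = ctx H' g i' j'"
    proof (cases "g = g'")
      case True thus ?thesis using a key by metis
    next
      case False
      hence "ctx H' g = ctx H g" by (simp add: ctx_def[abs_def] H'_def)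
      thus ?thesis using h a unfolding holistic_def by metis
    qed
  next
    fix g i j assume a: "occ g i j \<and> level g i ! j = Ff"
    show "ctx H' g i j = P0 U 1"
    proof (cases "g = g'")
      case True thus ?thesis using a key Mf_Ff[OF h] by metis
    next
      case False
      hence "ctx H' g = ctx H g" by (simp add: ctx_def[abs_def] H'_def)
      thus ?thesis using h a unfolding holistic_def by metis
    qed
  next
    fix g i j assume a: "occ g i j \<and> level g i ! j = Tt"
    show "ctx H' g i j = P1 U 1"
    proof (cases "g = g'")
      case True thus ?thesis using a key Mf_Tt[OF h] by metis
    next
      case False
      hence "ctx H' g = ctx H g" by (simp add: ctx_def[abs_def] H'_def)
      thus ?thesis using h a unfolding holistic_def by metis
    qed
  qed
  have "holm H' g' \<phi> = ?M \<phi>" if "\<phi> \<in> subf g'" for \<phi>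
    by (rule holm_unique[OF key that])
  thus ?thesis using hol by blast
qed

theorem theorem4p16:
  fixes \<alpha> \<beta> \<delta> :: form
  shows "\<alpha> \<Turnstile> \<alpha> \<and> (\<alpha> \<Turnstile> \<beta> \<and> \<beta> \<Turnstile> \<delta> \<longrightarrow> \<alpha> \<Turnstile> \<delta>)"
proof (intro conjI impI)
  show "\<alpha> \<Turnstile> \<alpha>" by (simp add: entails_def)
next
  assume ab: "\<alpha> \<Turnstile> \<beta> \<and> \<beta> \<Turnstile> \<delta>"
  show "\<alpha> \<Turnstile> \<delta>"
    unfolding entails_def
  proof (intro allI impI)
    fix U \<gamma> H assume a: "unitary2 U \<and> \<alpha> \<in> subf \<gamma> \<and> \<delta> \<in> subf \<gamma> \<and> holistic U H"
    hence u: "unitary2 U" and sa: "\<alpha> \<in> subf \<gamma>" and sd: "\<delta> \<in> subf \<gamma>" and h: "holistic U H" by auto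
    define g' where "g' = Xor \<gamma> \<beta>"
    define H' where "H' = H(g' := (\<lambda>t. stl U g' t (blk U H \<gamma> g')))"
    have ext: "holistic U H' \<and> (\<forall>\<phi>\<in>subf g'. holm H' g' \<phi> = Mf U H \<gamma> \<phi>)"
      using extend_model[OF u h, of \<gamma> \<beta>] unfolding g'_def H'_def by simp
    have sa': "\<alpha> \<in> subf g'" "\<beta> \<in> subf g'" "\<delta> \<in> subf g'"
      using sa sd subf_self[of \<beta>] unfolding g'_def by auto
    have ma: "holm H' g' \<alpha> = holm H \<gamma> \<alpha>" using ext sa'(1) sa by (simp add: Mf_def)
    have md: "holm H' g' \<delta> = holm H \<gamma> \<delta>" using ext sa'(3) sd by (simp add: Mf_def)
    have "prob U (At \<alpha>) (holm H' g' \<alpha>) \<le> prob U (At \<beta>) (holm H' g' \<beta>)"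
      using ab ext u sa' unfolding entails_def by blast
    also have "\<dots> \<le> prob U (At \<delta>) (holm H' g' \<delta>)"
      using ab ext u sa' unfolding entails_def by blast
    finally show "prob U (At \<alpha>) (holm H \<gamma> \<alpha>) \<le> prob U (At \<delta>) (holm H \<gamma> \<delta>)"
      using ma md by simp
  qed
qed


end
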